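(* Let $\mathbb{K}$ be a field of characteristic $0$. Suppose $\mathcal{A}$ is a $2n$-dimensional Poincaré CDGA over $\mathbb{K}$ with trivial differential, and let $\omega\in\mathcal{A}^{2n}$ be the dual of the Poincaré class. Assume also that $\mathcal{A}^i=0$ for $i<0$. Let $\theta$ be a new element of degree $2n-1$ and $\mathcal{A}_\theta=\mathcal{A}\otimes\Lambda\theta$ with $d\theta=\omega$. If $\mathcal{A}_\theta$ is formal, then $\mathcal{A}^{2i+1}=0$ for all $i\in\mathbb{Z}$.
   Context: A finite-dimensional graded commutative algebra $H$ is $n$-dimensional Poincaré if there exists $\alpha_H\in(H^n)^\vee$ (the Poincaré class) such that $H^i\to(H^{n-i})^\vee$, $x\mapsto(y\mapsto\alpha_H(xy))$, is an isomorphism for all $i$; a CDGA is Poincaré if its cohomology is. The dual of the Poincaré class is the element of top degree $\omega$ paired to $\alpha_H$, i.e. with $\alpha_H(\omega)=1$ spanning the top degree. $\mathcal{A}_\theta=\{x+\theta y:x,y\in\mathcal{A}\}$ ($\theta^2=0$ since $\theta$ has odd degree). A CDGA is formal if it is connected to its cohomology by a zigzag of quasi-isomorphisms. *)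

theory Defs
  imports Main
begin

text \<open>A (cohomologically) graded commutative differential graded algebra over a field 'k,
  presented degreewise: for each degree i a set of homogeneous elements cmp i, which is a
  'k-vector space with zero zr i, addition ad i and scalar multiplication sc i;
  multiplication ml i j : A^i x A^j -> A^(i+j); unit un in A^0; differential
  df i : A^i -> A^(i+1).  The CDGA is the (external) direct sum of the A^i.\<close>

record ('k, 'a) cdga =
  cmp :: "int \<Rightarrow> 'a set"
  zr  :: "int \<Rightarrow> 'a"
  ad  :: "int \<Rightarrow> 'a \<Rightarrow> 'a \<Rightarrow> 'a"
  sc  :: "int \<Rightarrow> 'k \<Rightarrow> 'a \<Rightarrow> 'a"
  ml  :: "int \<Rightarrow> int \<Rightarrow> 'a \<Rightarrow> 'a \<Rightarrow> 'a"
  un  :: "'a"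
  df  :: "int \<Rightarrow> 'a \<Rightarrow> 'a"

definition psign :: "int \<Rightarrow> 'k::field" where
  "psign i = (if even i then 1 else -1)"

definition vs_on :: "'a set \<Rightarrow> 'a \<Rightarrow> ('a \<Rightarrow> 'a \<Rightarrow> 'a) \<Rightarrow> ('k::field \<Rightarrow> 'a \<Rightarrow> 'a) \<Rightarrow> bool" where
  "vs_on V z a s \<longleftrightarrow>
     z \<in> V \<and> (\<forall>x\<in>V. \<forall>y\<in>V. a x y \<in> V) \<and> (\<forall>c. \<forall>x\<in>V. s c x \<in> V)
   \<and> (\<forall>x\<in>V. \<forall>y\<in>V. \<forall>w\<in>V. a (a x y) w = a x (a y w))
   \<and> (\<forall>x\<in>V. \<forall>y\<in>V. a x y = a y x)
   \<and> (\<forall>x\<in>V. a z x = x)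
   \<and> (\<forall>x\<in>V. a x (s (-1) x) = z)
   \<and> (\<forall>c. \<forall>x\<in>V. \<forall>y\<in>V. s c (a x y) = a (s c x) (s c y))
   \<and> (\<forall>c d. \<forall>x\<in>V. s (c + d) x = a (s c x) (s d x))
   \<and> (\<forall>c d. \<forall>x\<in>V. s (c * d) x = s c (s d x))
   \<and> (\<forall>x\<in>V. s 1 x = x)"

definition is_cdga :: "('k::field, 'a) cdga \<Rightarrow> bool" where
  "is_cdga A \<longleftrightarrow>
     (\<forall>i. vs_on (cmp A i) (zr A i) (ad A i) (sc A i))
   \<and> (\<forall>i j. \<forall>x\<in>cmp A i. \<forall>y\<in>cmp A j. ml A i j x y \<in> cmp A (i + j))
   \<and> (\<forall>i j. \<forall>x\<in>cmp A i. \<forall>x'\<in>cmp A i. \<forall>y\<in>cmp A j.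
        ml A i j (ad A i x x') y = ad A (i + j) (ml A i j x y) (ml A i j x' y))
   \<and> (\<forall>i j. \<forall>x\<in>cmp A i. \<forall>y\<in>cmp A j. \<forall>y'\<in>cmp A j.
        ml A i j x (ad A j y y') = ad A (i + j) (ml A i j x y) (ml A i j x y'))
   \<and> (\<forall>i j c. \<forall>x\<in>cmp A i. \<forall>y\<in>cmp A j.
        ml A i j (sc A i c x) y = sc A (i + j) c (ml A i j x y)
      \<and> ml A i j x (sc A j c y) = sc A (i + j) c (ml A i j x y))
   \<and> (\<forall>i j k. \<forall>x\<in>cmp A i. \<forall>y\<in>cmp A j. \<forall>z\<in>cmp A k.
        ml A (i + j) k (ml A i j x y) z = ml A i (j + k) x (ml A j k y z))
   \<and> un A \<in> cmp A 0
   \<and> (\<forall>i. \<forall>x\<in>cmp A i. ml A 0 i (un A) x = x \<and> ml A i 0 x (un A) = x)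
   \<and> (\<forall>i j. \<forall>x\<in>cmp A i. \<forall>y\<in>cmp A j.
        ml A i j x y = sc A (i + j) (psign (i * j)) (ml A j i y x))
   \<and> (\<forall>i. \<forall>x\<in>cmp A i. df A i x \<in> cmp A (i + 1))
   \<and> (\<forall>i. \<forall>x\<in>cmp A i. \<forall>y\<in>cmp A i. df A i (ad A i x y) = ad A (i + 1) (df A i x) (df A i y))
   \<and> (\<forall>i c. \<forall>x\<in>cmp A i. df A i (sc A i c x) = sc A (i + 1) c (df A i x))
   \<and> (\<forall>i. \<forall>x\<in>cmp A i. df A (i + 1) (df A i x) = zr A (i + 2))
   \<and> (\<forall>i j. \<forall>x\<in>cmp A i. \<forall>y\<in>cmp A j.
        df A (i + j) (ml A i j x y)
        = ad A (i + j + 1) (ml A (i + 1) j (df A i x) y)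
                           (sc A (i + j + 1) (psign i) (ml A i (j + 1) x (df A j y))))"

definition cdga_hom :: "('k::field, 'a) cdga \<Rightarrow> ('k, 'b) cdga \<Rightarrow> (int \<Rightarrow> 'a \<Rightarrow> 'b) \<Rightarrow> bool" where
  "cdga_hom A B f \<longleftrightarrow>
     (\<forall>i. \<forall>x\<in>cmp A i. f i x \<in> cmp B i)
   \<and> (\<forall>i. \<forall>x\<in>cmp A i. \<forall>y\<in>cmp A i. f i (ad A i x y) = ad B i (f i x) (f i y))
   \<and> (\<forall>i c. \<forall>x\<in>cmp A i. f i (sc A i c x) = sc B i c (f i x))
   \<and> (\<forall>i j. \<forall>x\<in>cmp A i. \<forall>y\<in>cmp A j. f (i + j) (ml A i j x y) = ml B i j (f i x) (f j y))
   \<and> f 0 (un A) = un B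
   \<and> (\<forall>i. \<forall>x\<in>cmp A i. f (i + 1) (df A i x) = df B i (f i x))"

definition cocyc :: "('k::field, 'a) cdga \<Rightarrow> int \<Rightarrow> 'a set" where
  "cocyc A i = {x \<in> cmp A i. df A i x = zr A (i + 1)}"

definition cobdry :: "('k::field, 'a) cdga \<Rightarrow> int \<Rightarrow> 'a set" where
  "cobdry A i = df A (i - 1) ` cmp A (i - 1)"

text \<open>Quasi-isomorphism: a CDGA morphism whose induced map H^i(A) -> H^i(B) is injective and
  surjective for every i (written out on representatives).\<close>
definition quasi_iso :: "('k::field, 'a) cdga \<Rightarrow> ('k, 'b) cdga \<Rightarrow> (int \<Rightarrow> 'a \<Rightarrow> 'b) \<Rightarrow> bool" where
  "quasi_iso A B f \<longleftrightarrow> is_cdga A \<and> is_cdga B \<and> cdga_hom A B f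
   \<and> (\<forall>i. (\<forall>z\<in>cocyc A i. f i z \<in> cobdry B i \<longrightarrow> z \<in> cobdry A i)
        \<and> (\<forall>w\<in>cocyc B i. \<exists>z\<in>cocyc A i. ad B i (f i z) (sc B i (-1) w) \<in> cobdry B i))"

definition coset :: "('k::field, 'a) cdga \<Rightarrow> int \<Rightarrow> 'a \<Rightarrow> 'a set" where
  "coset A i z = {ad A i z b | b. b \<in> cobdry A i}"

definition crep :: "('k::field, 'a) cdga \<Rightarrow> int \<Rightarrow> 'a set \<Rightarrow> 'a" where
  "crep A i X = (SOME z. z \<in> cocyc A i \<and> X = coset A i z)"

definition cohom :: "('k::field, 'a) cdga \<Rightarrow> ('k, 'a set) cdga" where
  "cohom A = \<lparr> cmp = (\<lambda>i. coset A i ` cocyc A i),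
               zr = (\<lambda>i. coset A i (zr A i)),
               ad = (\<lambda>i X Y. coset A i (ad A i (crep A i X) (crep A i Y))),
               sc = (\<lambda>i c X. coset A i (sc A i c (crep A i X))),
               ml = (\<lambda>i j X Y. coset A (i + j) (ml A i j (crep A i X) (crep A j Y))),
               un = coset A 0 (un A),
               df = (\<lambda>i X. coset A (i + 1) (zr A (i + 1))) \<rparr>"

text \<open>Formality: a zigzag of quasi-isomorphisms between A and H(A); the intermediate CDGAs
  live in a type 'z (the theorem is stated for an arbitrary type 'z).\<close>
definition qlink :: "('k::field, 'a) cdga \<Rightarrow> ('k, 'b) cdga \<Rightarrow> bool" where
  "qlink A B \<longleftrightarrow> (\<exists>f. quasi_iso A B f) \<or> (\<exists>g. quasi_iso B A g)"

definition zigzag_via :: "('k::field, 'z) cdga list \<Rightarrow> ('k, 'a) cdga \<Rightarrow> ('k, 'b) cdga \<Rightarrow> bool" where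
  "zigzag_via cs A B \<longleftrightarrow>
     (cs = [] \<and> qlink A B)
   \<or> (cs \<noteq> [] \<and> (\<forall>C\<in>set cs. is_cdga C) \<and> qlink A (hd cs)
      \<and> (\<forall>k. Suc k < length cs \<longrightarrow> qlink (cs ! k) (cs ! Suc k)) \<and> qlink (last cs) B)"

definition formal_in :: "'z itself \<Rightarrow> ('k::field, 'a) cdga \<Rightarrow> bool" where
  "formal_in T A \<longleftrightarrow> (\<exists>cs :: ('k, 'z) cdga list. zigzag_via cs A (cohom A))"

inductive_set gspan :: "('k::field, 'a) cdga \<Rightarrow> int \<Rightarrow> 'a set \<Rightarrow> 'a set"
  for G :: "('k, 'a) cdga" and i :: int and S :: "'a set" where
  gspan_zero: "zr G i \<in> gspan G i S"
| gspan_gen: "x \<in> S \<Longrightarrow> x \<in> gspan G i S"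
| gspan_add: "x \<in> gspan G i S \<Longrightarrow> y \<in> gspan G i S \<Longrightarrow> ad G i x y \<in> gspan G i S"
| gspan_sc: "x \<in> gspan G i S \<Longrightarrow> sc G i c x \<in> gspan G i S"

definition fin_dim_ga :: "('k::field, 'a) cdga \<Rightarrow> bool" where
  "fin_dim_ga G \<longleftrightarrow> finite {i. cmp G i \<noteq> {zr G i}}
     \<and> (\<forall>i. \<exists>S. finite S \<and> S \<subseteq> cmp G i \<and> cmp G i \<subseteq> gspan G i S)"

definition lin_functional :: "('k::field, 'a) cdga \<Rightarrow> int \<Rightarrow> ('a \<Rightarrow> 'k) \<Rightarrow> bool" where
  "lin_functional G i \<phi> \<longleftrightarrow>
     (\<forall>x\<in>cmp G i. \<forall>y\<in>cmp G i. \<phi> (ad G i x y) = \<phi> x + \<phi> y)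
   \<and> (\<forall>c. \<forall>x\<in>cmp G i. \<phi> (sc G i c x) = c * \<phi> x)"

definition poincare_class :: "('k::field, 'a) cdga \<Rightarrow> int \<Rightarrow> ('a \<Rightarrow> 'k) \<Rightarrow> bool" where
  "poincare_class G n \<alpha> \<longleftrightarrow> lin_functional G n \<alpha>
   \<and> (\<forall>i. (\<forall>x\<in>cmp G i. (\<forall>y\<in>cmp G (n - i). \<alpha> (ml G i (n - i) x y) = 0) \<longrightarrow> x = zr G i)
        \<and> (\<forall>\<phi>. lin_functional G (n - i) \<phi> \<longrightarrow>
              (\<exists>x\<in>cmp G i. \<forall>y\<in>cmp G (n - i). \<phi> y = \<alpha> (ml G i (n - i) x y))))"

definition poincare_ga :: "('k::field, 'a) cdga \<Rightarrow> int \<Rightarrow> bool" where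
  "poincare_ga G n \<longleftrightarrow> fin_dim_ga G \<and> (\<exists>\<alpha>. poincare_class G n \<alpha>)"

definition poincare_cdga :: "('k::field, 'a) cdga \<Rightarrow> int \<Rightarrow> bool" where
  "poincare_cdga A n \<longleftrightarrow> poincare_ga (cohom A) n"

text \<open>An element of degree k
  is a pair (x, y) standing for x + y theta, with x in A^k and y in A^(k-2n+1).
  (x1 + y1 theta)(x2 + y2 theta) = x1 x2 + (x1 y2 + (-1)^|x2| y1 x2) theta,
  d(x + y theta) = dx + (-1)^|y| y omega + (dy) theta.\<close>
definition A_theta :: "('k::field, 'a) cdga \<Rightarrow> nat \<Rightarrow> 'a \<Rightarrow> ('k, 'a \<times> 'a) cdga" where
  "A_theta A n \<omega> = (let t = 2 * int n - 1 in
     \<lparr> cmp = (\<lambda>k. cmp A k \<times> cmp A (k - t)),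
       zr = (\<lambda>k. (zr A k, zr A (k - t))),
       ad = (\<lambda>k p q. (ad A k (fst p) (fst q), ad A (k - t) (snd p) (snd q))),
       sc = (\<lambda>k c p. (sc A k c (fst p), sc A (k - t) c (snd p))),
       ml = (\<lambda>k l p q. (ml A k l (fst p) (fst q),
                         ad A (k + l - t) (ml A k (l - t) (fst p) (snd q))
                                          (sc A (k + l - t) (psign l) (ml A (k - t) l (snd p) (fst q))))),
       un = (un A, zr A (0 - t)),
       df = (\<lambda>k p. (ad A (k + 1) (df A k (fst p))
                               (sc A (k + 1) (psign (k - t)) (ml A (k - t) (2 * int n) (snd p) \<omega>)),
                     df A (k - t) (snd p))) \<rparr>)"

end

theory Submission
  imports Defs
begin


definition hm :: "('k::field,'a) cdga \<Rightarrow> int \<times> 'a \<Rightarrow> bool" where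
  "hm A X \<longleftrightarrow> snd X \<in> cmp A (fst X)"
definition pz :: "('k::field,'a) cdga \<Rightarrow> int \<Rightarrow> int \<times> 'a" where
  "pz A i = (i, zr A i)"
definition padd :: "('k::field,'a) cdga \<Rightarrow> int \<times> 'a \<Rightarrow> int \<times> 'a \<Rightarrow> int \<times> 'a" where
  "padd A X Y = (fst X, ad A (fst X) (snd X) (snd Y))"
definition psc :: "('k::field,'a) cdga \<Rightarrow> 'k \<Rightarrow> int \<times> 'a \<Rightarrow> int \<times> 'a" where
  "psc A c X = (fst X, sc A (fst X) c (snd X))"
definition pmul :: "('k::field,'a) cdga \<Rightarrow> int \<times> 'a \<Rightarrow> int \<times> 'a \<Rightarrow> int \<times> 'a" where
  "pmul A X Y = (fst X + fst Y, ml A (fst X) (fst Y) (snd X) (snd Y))"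
definition pd :: "('k::field,'a) cdga \<Rightarrow> int \<times> 'a \<Rightarrow> int \<times> 'a" where
  "pd A X = (fst X + 1, df A (fst X) (snd X))"

lemma fst_ops[simp]: "fst (pz A i) = i" "fst (padd A X Y) = fst X" "fst (psc A c X) = fst X"
  "fst (pmul A X Y) = fst X + fst Y" "fst (pd A X) = fst X + 1"
  by (simp_all add: pz_def padd_def psc_def pmul_def pd_def)

lemma pz_eq[simp]: "pz A i = pz A j \<longleftrightarrow> i = j"
  by (auto simp add: pz_def)

lemma psign_add[simp]: "psign (i + j) = (psign i * psign j :: 'k::field)"
  by (simp add: psign_def)
lemma psign_diff[simp]: "psign (i - j) = (psign i * psign j :: 'k::field)"
  by (simp add: psign_def)
lemma psign_minus[simp]: "psign (- i) = (psign i :: 'k::field)"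
  by (simp add: psign_def)
lemma psign_one[simp]: "psign 1 = (-1 :: 'k::field)"
  by (simp add: psign_def)
lemma psign_zero[simp]: "psign 0 = (1 :: 'k::field)"
  by (simp add: psign_def)
lemma psign_sq[simp]: "psign i * psign i = (1 :: 'k::field)"
  by (simp add: psign_def)
lemma psign_sq2[simp]: "psign i * (psign i * x) = (x :: 'k::field)"
  by (simp add: psign_def)
lemma psign_nz[simp]: "psign i \<noteq> (0 :: 'k::field)"
  by (simp add: psign_def)

locale pc = fixes A :: "('k::field, 'a) cdga" assumes cd: "is_cdga A"
begin

lemma cd': "(\<forall>i. vs_on (cmp A i) (zr A i) (ad A i) (sc A i))" using cd unfolding is_cdga_def by (elim conjE)
lemma vs: "vs_on (cmp A i) (zr A i) (ad A i) (sc A i)" using cd' by blast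

lemma cdc: "(\<forall>i j. \<forall>x\<in>cmp A i. \<forall>y\<in>cmp A j. ml A i j x y \<in> cmp A (i + j))
   \<and> (\<forall>i j. \<forall>x\<in>cmp A i. \<forall>x'\<in>cmp A i. \<forall>y\<in>cmp A j.
        ml A i j (ad A i x x') y = ad A (i + j) (ml A i j x y) (ml A i j x' y))
   \<and> (\<forall>i j. \<forall>x\<in>cmp A i. \<forall>y\<in>cmp A j. \<forall>y'\<in>cmp A j.
        ml A i j x (ad A j y y') = ad A (i + j) (ml A i j x y) (ml A i j x y'))
   \<and> (\<forall>i j c. \<forall>x\<in>cmp A i. \<forall>y\<in>cmp A j.
        ml A i j (sc A i c x) y = sc A (i + j) c (ml A i j x y)
      \<and> ml A i j x (sc A j c y) = sc A (i + j) c (ml A i j x y))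
   \<and> (\<forall>i j k. \<forall>x\<in>cmp A i. \<forall>y\<in>cmp A j. \<forall>z\<in>cmp A k.
        ml A (i + j) k (ml A i j x y) z = ml A i (j + k) x (ml A j k y z))
   \<and> un A \<in> cmp A 0
   \<and> (\<forall>i. \<forall>x\<in>cmp A i. ml A 0 i (un A) x = x \<and> ml A i 0 x (un A) = x)
   \<and> (\<forall>i j. \<forall>x\<in>cmp A i. \<forall>y\<in>cmp A j.
        ml A i j x y = sc A (i + j) (psign (i * j)) (ml A j i y x))
   \<and> (\<forall>i. \<forall>x\<in>cmp A i. df A i x \<in> cmp A (i + 1))
   \<and> (\<forall>i. \<forall>x\<in>cmp A i. \<forall>y\<in>cmp A i. df A i (ad A i x y) = ad A (i + 1) (df A i x) (df A i y))
   \<and> (\<forall>i c. \<forall>x\<in>cmp A i. df A i (sc A i c x) = sc A (i + 1) c (df A i x))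
   \<and> (\<forall>i. \<forall>x\<in>cmp A i. df A (i + 1) (df A i x) = zr A (i + 2))
   \<and> (\<forall>i j. \<forall>x\<in>cmp A i. \<forall>y\<in>cmp A j.
        df A (i + j) (ml A i j x y)
        = ad A (i + j + 1) (ml A (i + 1) j (df A i x) y)
                           (sc A (i + j + 1) (psign i) (ml A i (j + 1) x (df A j y))))"
  using cd unfolding is_cdga_def by (elim conjE) (intro conjI; assumption)
lemma cdc0: "(\<forall>i j. \<forall>x\<in>cmp A i. \<forall>y\<in>cmp A j. ml A i j x y \<in> cmp A (i + j))"
  using cdc by (elim conjE) assumption
lemma cdc1: "(\<forall>i j. \<forall>x\<in>cmp A i. \<forall>x'\<in>cmp A i. \<forall>y\<in>cmp A j.
        ml A i j (ad A i x x') y = ad A (i + j) (ml A i j x y) (ml A i j x' y))"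
  using cdc by (elim conjE) assumption
lemma cdc2: "(\<forall>i j. \<forall>x\<in>cmp A i. \<forall>y\<in>cmp A j. \<forall>y'\<in>cmp A j.
        ml A i j x (ad A j y y') = ad A (i + j) (ml A i j x y) (ml A i j x y'))"
  using cdc by (elim conjE) assumption
lemma cdc3: "(\<forall>i j c. \<forall>x\<in>cmp A i. \<forall>y\<in>cmp A j.
        ml A i j (sc A i c x) y = sc A (i + j) c (ml A i j x y)
      \<and> ml A i j x (sc A j c y) = sc A (i + j) c (ml A i j x y))"
  using cdc by (elim conjE) assumption
lemma cdc4: "(\<forall>i j k. \<forall>x\<in>cmp A i. \<forall>y\<in>cmp A j. \<forall>z\<in>cmp A k.
        ml A (i + j) k (ml A i j x y) z = ml A i (j + k) x (ml A j k y z))"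
  using cdc by (elim conjE) assumption
lemma cdc5: "un A \<in> cmp A 0"
  using cdc by (elim conjE) assumption
lemma cdc6: "(\<forall>i. \<forall>x\<in>cmp A i. ml A 0 i (un A) x = x \<and> ml A i 0 x (un A) = x)"
  using cdc by (elim conjE) assumption
lemma cdc7: "(\<forall>i j. \<forall>x\<in>cmp A i. \<forall>y\<in>cmp A j.
        ml A i j x y = sc A (i + j) (psign (i * j)) (ml A j i y x))"
  using cdc by (elim conjE) assumption
lemma cdc8: "(\<forall>i. \<forall>x\<in>cmp A i. df A i x \<in> cmp A (i + 1))"
  using cdc by (elim conjE) assumption
lemma cdc9: "(\<forall>i. \<forall>x\<in>cmp A i. \<forall>y\<in>cmp A i. df A i (ad A i x y) = ad A (i + 1) (df A i x) (df A i y))"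
  using cdc by (elim conjE) assumption
lemma cdc10: "(\<forall>i c. \<forall>x\<in>cmp A i. df A i (sc A i c x) = sc A (i + 1) c (df A i x))"
  using cdc by (elim conjE) assumption
lemma cdc11: "(\<forall>i. \<forall>x\<in>cmp A i. df A (i + 1) (df A i x) = zr A (i + 2))"
  using cdc by (elim conjE) assumption
lemma cdc12: "(\<forall>i j. \<forall>x\<in>cmp A i. \<forall>y\<in>cmp A j.
        df A (i + j) (ml A i j x y)
        = ad A (i + j + 1) (ml A (i + 1) j (df A i x) y)
                           (sc A (i + j + 1) (psign i) (ml A i (j + 1) x (df A j y))))"
  using cdc by (elim conjE) assumption

lemma vsc: "z \<in> V \<and> (\<forall>x\<in>V. \<forall>y\<in>V. a x y \<in> V) \<and> (\<forall>c. \<forall>x\<in>V. s c x \<in> V)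
   \<and> (\<forall>x\<in>V. \<forall>y\<in>V. \<forall>w\<in>V. a (a x y) w = a x (ad A i y w))
   \<and> (\<forall>x\<in>V. \<forall>y\<in>V. a x y = ad A i y x)
   \<and> (\<forall>x\<in>V. a z x = x)
   \<and> (\<forall>x\<in>V. a x (s (-1) x) = z)
   \<and> (\<forall>c. \<forall>x\<in>V. \<forall>y\<in>V. s c (a x y) = a (s c x) (s c y))
   \<and> (\<forall>c d. \<forall>x\<in>V. s (c + d) x = a (s c x) (s d x))
   \<and> (\<forall>c d. \<forall>x\<in>V. s (c * d) x = s c (s d x))
   \<and> (\<forall>x\<in>V. s 1 x = x)" if "V = cmp A i" "z = zr A i" "a = ad A i" "s = sc A i"
  using vs[of i] unfolding that vs_on_def by (elim conjE) (intro conjI; assumption)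
lemma vsc0: "zr A i \<in> (cmp A i)"
  using vsc[OF refl refl refl refl, of i] by (elim conjE) assumption
lemma vsc1: "(\<forall>x\<in>(cmp A i). \<forall>y\<in>(cmp A i). ad A i x y \<in> (cmp A i))"
  using vsc[OF refl refl refl refl, of i] by (elim conjE) assumption
lemma vsc2: "(\<forall>c. \<forall>x\<in>(cmp A i). sc A i c x \<in> (cmp A i))"
  using vsc[OF refl refl refl refl, of i] by (elim conjE) assumption
lemma vsc3: "(\<forall>x\<in>(cmp A i). \<forall>y\<in>(cmp A i). \<forall>w\<in>(cmp A i). ad A i (ad A i x y) w = ad A i x (ad A i y w))"
  using vsc[OF refl refl refl refl, of i] by (elim conjE) assumption
lemma vsc4: "(\<forall>x\<in>(cmp A i). \<forall>y\<in>(cmp A i). ad A i x y = ad A i y x)"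
  using vsc[OF refl refl refl refl, of i] by (elim conjE) assumption
lemma vsc5: "(\<forall>x\<in>(cmp A i). ad A i (zr A i) x = x)"
  using vsc[OF refl refl refl refl, of i] by (elim conjE) assumption
lemma vsc6: "(\<forall>x\<in>(cmp A i). ad A i x (sc A i (-1) x) = zr A i)"
  using vsc[OF refl refl refl refl, of i] by (elim conjE) assumption
lemma vsc7: "(\<forall>c. \<forall>x\<in>(cmp A i). \<forall>y\<in>(cmp A i). sc A i c (ad A i x y) = ad A i (sc A i c x) (sc A i c y))"
  using vsc[OF refl refl refl refl, of i] by (elim conjE) assumption
lemma vsc8: "(\<forall>c d. \<forall>x\<in>(cmp A i). sc A i (c + d) x = ad A i (sc A i c x) (sc A i d x))"
  using vsc[OF refl refl refl refl, of i] by (elim conjE) assumption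
lemma vsc9: "(\<forall>c d. \<forall>x\<in>(cmp A i). sc A i (c * d) x = sc A i c (sc A i d x))"
  using vsc[OF refl refl refl refl, of i] by (elim conjE) assumption
lemma vsc10: "(\<forall>x\<in>(cmp A i). sc A i 1 x = x)"
  using vsc[OF refl refl refl refl, of i] by (elim conjE) assumption

lemma z_in: "zr A i \<in> cmp A i" using vsc0[of i] by blast
lemma add_in: "x \<in> cmp A i \<Longrightarrow> y \<in> cmp A i \<Longrightarrow> ad A i x y \<in> cmp A i"
  using vsc1[of i] by blast
lemma sc_in: "x \<in> cmp A i \<Longrightarrow> sc A i c x \<in> cmp A i"
  using vsc2[of i] by blast
lemma add_assoc: "x \<in> cmp A i \<Longrightarrow> y \<in> cmp A i \<Longrightarrow> w \<in> cmp A i \<Longrightarrow>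
   ad A i (ad A i x y) w = ad A i x (ad A i y w)"
  using vsc3[of i] by blast
lemma add_comm: "x \<in> cmp A i \<Longrightarrow> y \<in> cmp A i \<Longrightarrow> ad A i x y = ad A i y x"
  using vsc4[of i] by blast
lemma add_zl: "x \<in> cmp A i \<Longrightarrow> ad A i (zr A i) x = x"
  using vsc5[of i] by blast
lemma add_neg: "x \<in> cmp A i \<Longrightarrow> ad A i x (sc A i (-1) x) = zr A i"
  using vsc6[of i] by blast
lemma sc_add: "x \<in> cmp A i \<Longrightarrow> y \<in> cmp A i \<Longrightarrow> sc A i c (ad A i x y) = ad A i (sc A i c x) (sc A i c y)"
  using vsc7[of i] by blast
lemma sc_plus: "x \<in> cmp A i \<Longrightarrow> sc A i (c + d) x = ad A i (sc A i c x) (sc A i d x)"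
  using vsc8[of i] by blast
lemma sc_mult: "x \<in> cmp A i \<Longrightarrow> sc A i (c * d) x = sc A i c (sc A i d x)"
  using vsc9[of i] by blast
lemma sc_one: "x \<in> cmp A i \<Longrightarrow> sc A i 1 x = x"
  using vsc10[of i] by blast

lemma add_zr: "x \<in> cmp A i \<Longrightarrow> ad A i x (zr A i) = x"
  using add_comm add_zl z_in by metis

lemma add_cancel: assumes "x \<in> cmp A i" "y \<in> cmp A i" "y' \<in> cmp A i" "ad A i x y = ad A i x y'"
  shows "y = y'"
proof -
  have n: "sc A i (-1) x \<in> cmp A i" using assms sc_in by blast
  have "y = ad A i (ad A i (sc A i (-1) x) x) y"
    using assms add_neg add_comm n add_zl by metis
  also have "\<dots> = ad A i (ad A i (sc A i (-1) x) x) y'"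
    using assms add_assoc n by metis
  also have "\<dots> = y'" using assms add_neg add_comm n add_zl by metis
  finally show ?thesis .
qed

lemma sc_zero: "x \<in> cmp A i \<Longrightarrow> sc A i 0 x = zr A i"
proof -
  assume x: "x \<in> cmp A i"
  have "ad A i (sc A i 0 x) (sc A i 0 x) = ad A i (sc A i 0 x) (zr A i)"
    using sc_plus[OF x, of 0 0] add_zr sc_in x by simp
  thus ?thesis using add_cancel sc_in x z_in by blast
qed

lemma sc_zr: "sc A i c (zr A i) = zr A i"
proof -
  have "sc A i c (zr A i) = sc A i c (sc A i 0 (zr A i))" using sc_zero z_in by simp
  also have "\<dots> = zr A i" using sc_mult[OF z_in] sc_zero z_in by (metis mult_zero_right)
  finally show ?thesis .
qed

lemma ml_in: "x \<in> cmp A i \<Longrightarrow> y \<in> cmp A j \<Longrightarrow> ml A i j x y \<in> cmp A (i + j)"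
  using cdc0 by blast
lemma ml_add_l: "x \<in> cmp A i \<Longrightarrow> x' \<in> cmp A i \<Longrightarrow> y \<in> cmp A j \<Longrightarrow>
   ml A i j (ad A i x x') y = ad A (i + j) (ml A i j x y) (ml A i j x' y)"
  using cdc1 by blast
lemma ml_add_r: "x \<in> cmp A i \<Longrightarrow> y \<in> cmp A j \<Longrightarrow> y' \<in> cmp A j \<Longrightarrow>
   ml A i j x (ad A j y y') = ad A (i + j) (ml A i j x y) (ml A i j x y')"
  using cdc2 by blast
lemma ml_sc_l: "x \<in> cmp A i \<Longrightarrow> y \<in> cmp A j \<Longrightarrow>
   ml A i j (sc A i c x) y = sc A (i + j) c (ml A i j x y)"
  using cdc3 by blast
lemma ml_sc_r: "x \<in> cmp A i \<Longrightarrow> y \<in> cmp A j \<Longrightarrow>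
   ml A i j x (sc A j c y) = sc A (i + j) c (ml A i j x y)"
  using cdc3 by blast
lemma ml_assoc: "x \<in> cmp A i \<Longrightarrow> y \<in> cmp A j \<Longrightarrow> z \<in> cmp A k \<Longrightarrow>
   ml A (i + j) k (ml A i j x y) z = ml A i (j + k) x (ml A j k y z)"
  using cdc4 by blast
lemma un_in: "un A \<in> cmp A 0" using cdc5 by blast
lemma ml_un: "x \<in> cmp A i \<Longrightarrow> ml A 0 i (un A) x = x \<and> ml A i 0 x (un A) = x"
  using cdc6 by blast
lemma ml_comm: "x \<in> cmp A i \<Longrightarrow> y \<in> cmp A j \<Longrightarrow>
   ml A i j x y = sc A (i + j) (psign (i * j)) (ml A j i y x)"
  using cdc7 by blast
lemma df_in: "x \<in> cmp A i \<Longrightarrow> df A i x \<in> cmp A (i + 1)"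
  using cdc8 by blast
lemma df_add: "x \<in> cmp A i \<Longrightarrow> y \<in> cmp A i \<Longrightarrow> df A i (ad A i x y) = ad A (i + 1) (df A i x) (df A i y)"
  using cdc9 by blast
lemma df_sc: "x \<in> cmp A i \<Longrightarrow> df A i (sc A i c x) = sc A (i + 1) c (df A i x)"
  using cdc10 by blast
lemma df_df: "x \<in> cmp A i \<Longrightarrow> df A (i + 1) (df A i x) = zr A (i + 2)"
  using cdc11 by blast
lemma df_ml: "x \<in> cmp A i \<Longrightarrow> y \<in> cmp A j \<Longrightarrow>
        df A (i + j) (ml A i j x y)
        = ad A (i + j + 1) (ml A (i + 1) j (df A i x) y)
                           (sc A (i + j + 1) (psign i) (ml A i (j + 1) x (df A j y)))"
  using cdc12 by blast

lemma ml_zr_l: "y \<in> cmp A j \<Longrightarrow> ml A i j (zr A i) y = zr A (i + j)"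
  using ml_sc_l[OF z_in, of y j i 0] sc_zr sc_zero ml_in z_in by metis
lemma ml_zr_r: "x \<in> cmp A i \<Longrightarrow> ml A i j x (zr A j) = zr A (i + j)"
  using ml_sc_r[OF _ z_in, of x i j 0] sc_zr sc_zero ml_in z_in by metis
lemma df_zr: "df A i (zr A i) = zr A (i + 1)"
  using df_sc[OF z_in, of i 0] sc_zr sc_zero df_in z_in by metis

end


context pc begin

lemma hm_pz[simp]: "hm A (pz A i)" by (simp add: hm_def pz_def z_in)
lemma hm_padd[simp]: "hm A X \<Longrightarrow> hm A Y \<Longrightarrow> fst Y = fst X \<Longrightarrow> hm A (padd A X Y)"
  by (simp add: hm_def padd_def add_in)
lemma hm_psc[simp]: "hm A X \<Longrightarrow> hm A (psc A c X)"
  by (simp add: hm_def psc_def sc_in)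
lemma hm_pmul[simp]: "hm A X \<Longrightarrow> hm A Y \<Longrightarrow> hm A (pmul A X Y)"
  by (simp add: hm_def pmul_def ml_in)
lemma hm_pd[simp]: "hm A X \<Longrightarrow> hm A (pd A X)"
  by (simp add: hm_def pd_def df_in)

lemma padd_assoc: "hm A X \<Longrightarrow> hm A Y \<Longrightarrow> hm A W \<Longrightarrow> fst Y = fst X \<Longrightarrow> fst W = fst X \<Longrightarrow>
  padd A (padd A X Y) W = padd A X (padd A Y W)"
  by (simp add: hm_def padd_def add_assoc)
lemma padd_comm: "hm A X \<Longrightarrow> hm A Y \<Longrightarrow> fst Y = fst X \<Longrightarrow> padd A X Y = padd A Y X"
  by (simp add: hm_def padd_def add_comm)
lemma padd_lcomm: "hm A X \<Longrightarrow> hm A Y \<Longrightarrow> hm A W \<Longrightarrow> fst Y = fst X \<Longrightarrow> fst W = fst X \<Longrightarrow>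
  padd A X (padd A Y W) = padd A Y (padd A X W)"
  by (metis padd_assoc padd_comm fst_ops(2))
lemma padd_pz_l[simp]: "hm A X \<Longrightarrow> i = fst X \<Longrightarrow> padd A (pz A i) X = X"
  by (simp add: hm_def padd_def pz_def add_zl)
lemma padd_pz_r[simp]: "hm A X \<Longrightarrow> i = fst X \<Longrightarrow> padd A X (pz A i) = X"
  by (simp add: hm_def padd_def pz_def add_zr)
lemma padd_neg: "hm A X \<Longrightarrow> padd A X (psc A (-1) X) = pz A (fst X)"
  by (simp add: hm_def padd_def pz_def psc_def add_neg)
lemma psc_padd[simp]: "hm A X \<Longrightarrow> hm A Y \<Longrightarrow> fst Y = fst X \<Longrightarrow>
  psc A c (padd A X Y) = padd A (psc A c X) (psc A c Y)"
  by (simp add: hm_def padd_def psc_def sc_add)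
lemma psc_psc[simp]: "hm A X \<Longrightarrow> psc A c (psc A d X) = psc A (c * d) X"
  by (simp add: hm_def psc_def sc_mult)
lemma psc_one[simp]: "hm A X \<Longrightarrow> psc A 1 X = X"
  by (simp add: hm_def psc_def sc_one)
lemma psc_zero[simp]: "hm A X \<Longrightarrow> psc A 0 X = pz A (fst X)"
  by (simp add: hm_def psc_def pz_def sc_zero)
lemma psc_pz[simp]: "psc A c (pz A i) = pz A i"
  by (simp add: psc_def pz_def sc_zr)
lemma padd_psc_same: "hm A X \<Longrightarrow> padd A (psc A c X) (psc A d X) = psc A (c + d) X"
  by (simp add: hm_def psc_def padd_def sc_plus)

lemma pmul_padd_l[simp]: "hm A X \<Longrightarrow> hm A X' \<Longrightarrow> hm A Y \<Longrightarrow> fst X' = fst X \<Longrightarrow>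
  pmul A (padd A X X') Y = padd A (pmul A X Y) (pmul A X' Y)"
  by (simp add: hm_def padd_def pmul_def ml_add_l)
lemma pmul_padd_r[simp]: "hm A X \<Longrightarrow> hm A Y \<Longrightarrow> hm A Y' \<Longrightarrow> fst Y' = fst Y \<Longrightarrow>
  pmul A X (padd A Y Y') = padd A (pmul A X Y) (pmul A X Y')"
  by (simp add: hm_def padd_def pmul_def ml_add_r)
lemma pmul_psc_l[simp]: "hm A X \<Longrightarrow> hm A Y \<Longrightarrow> pmul A (psc A c X) Y = psc A c (pmul A X Y)"
  by (simp add: hm_def psc_def pmul_def ml_sc_l)
lemma pmul_psc_r[simp]: "hm A X \<Longrightarrow> hm A Y \<Longrightarrow> pmul A X (psc A c Y) = psc A c (pmul A X Y)"
  by (simp add: hm_def psc_def pmul_def ml_sc_r)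
lemma pmul_assoc[simp]: "hm A X \<Longrightarrow> hm A Y \<Longrightarrow> hm A W \<Longrightarrow>
  pmul A (pmul A X Y) W = pmul A X (pmul A Y W)"
  by (simp add: hm_def pmul_def ml_assoc add.assoc)
lemma pmul_pz_l[simp]: "hm A Y \<Longrightarrow> pmul A (pz A i) Y = pz A (i + fst Y)"
  by (simp add: hm_def pz_def pmul_def ml_zr_l)
lemma pmul_pz_r[simp]: "hm A X \<Longrightarrow> pmul A X (pz A j) = pz A (fst X + j)"
  by (simp add: hm_def pz_def pmul_def ml_zr_r)
lemma pmul_comm: "hm A X \<Longrightarrow> hm A Y \<Longrightarrow> pmul A X Y = psc A (psign (fst X * fst Y)) (pmul A Y X)"
  by (simp add: hm_def psc_def pmul_def ml_comm[of "snd X" "fst X" "snd Y" "fst Y"] add.commute)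

lemma pd_padd[simp]: "hm A X \<Longrightarrow> hm A Y \<Longrightarrow> fst Y = fst X \<Longrightarrow>
  pd A (padd A X Y) = padd A (pd A X) (pd A Y)"
  by (simp add: hm_def padd_def pd_def df_add)
lemma pd_psc[simp]: "hm A X \<Longrightarrow> pd A (psc A c X) = psc A c (pd A X)"
  by (simp add: hm_def psc_def pd_def df_sc)
lemma pd_pd[simp]: "hm A X \<Longrightarrow> pd A (pd A X) = pz A (fst X + 2)"
proof -
  assume "hm A X"
  then have "df A (fst X + 1) (df A (fst X) (snd X)) = zr A (fst X + 2)"
    by (simp add: hm_def df_df)
  then show ?thesis by (simp add: pd_def pz_def add.assoc)
qed
lemma pd_pz[simp]: "pd A (pz A i) = pz A (i + 1)"
  by (simp add: pd_def pz_def df_zr)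
lemma pd_pmul: "hm A X \<Longrightarrow> hm A Y \<Longrightarrow>
  pd A (pmul A X Y) = padd A (pmul A (pd A X) Y) (psc A (psign (fst X)) (pmul A X (pd A Y)))"
proof -
  assume h: "hm A X" "hm A Y"
  obtain i x where X: "X = (i, x)" by fastforce
  obtain j y where Y: "Y = (j, y)" by fastforce
  have e1: "i + 1 + j = i + j + 1" "i + (j + 1) = i + j + 1" by simp_all
  show ?thesis using h df_ml[of x i y j]
    by (simp add: X Y hm_def pd_def pmul_def padd_def psc_def e1)
qed


end


definition psub :: "('k::field,'a) cdga \<Rightarrow> int \<times> 'a \<Rightarrow> int \<times> 'a \<Rightarrow> int \<times> 'a" where
  "psub A X Y = padd A X (psc A (-1) Y)"
definition cyc :: "('k::field,'a) cdga \<Rightarrow> int \<times> 'a \<Rightarrow> bool" where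
  "cyc A X \<longleftrightarrow> hm A X \<and> pd A X = pz A (fst X + 1)"
definition exact :: "('k::field,'a) cdga \<Rightarrow> int \<times> 'a \<Rightarrow> bool" where
  "exact A X \<longleftrightarrow> (\<exists>e. hm A e \<and> X = pd A e)"
definition Val :: "('k::field,'a) cdga \<Rightarrow> int \<times> 'a \<Rightarrow> int \<times> 'a \<Rightarrow> int \<times> 'a \<Rightarrow> int \<times> 'a \<Rightarrow> int \<times> 'a" where
  "Val A a c u v = padd A (pmul A u c) (psc A (- psign (fst a)) (pmul A a v))"
definition IE :: "('k::field,'a) cdga \<Rightarrow> int \<times> 'a \<Rightarrow> int \<times> 'a \<Rightarrow> int \<times> 'a \<Rightarrow> bool" where
  "IE A a c X \<longleftrightarrow> hm A X \<and> (\<exists>z w e. cyc A z \<and> cyc A w \<and> hm A e \<and> fst a + fst z = fst X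
      \<and> fst w + fst c = fst X \<and> fst e + 1 = fst X
      \<and> X = padd A (padd A (pmul A a z) (pmul A w c)) (pd A e))"
definition MQ :: "('k::field,'a) cdga \<Rightarrow> bool" where
  "MQ A \<longleftrightarrow> (\<forall>a b c u v. cyc A a \<longrightarrow> cyc A b \<longrightarrow> cyc A c \<longrightarrow> hm A u \<longrightarrow> hm A v
      \<longrightarrow> pd A u = pmul A a b \<longrightarrow> pd A v = pmul A b c \<longrightarrow> IE A a c (Val A a c u v))"

lemma fst_psub[simp]: "fst (psub A X Y) = fst X" by (simp add: psub_def)

context pc begin

lemmas AC = padd_assoc padd_comm padd_lcomm

lemma hm_psub[simp]: "hm A X \<Longrightarrow> hm A Y \<Longrightarrow> fst Y = fst X \<Longrightarrow> hm A (psub A X Y)"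
  by (simp add: psub_def)

lemma psub_add: "hm A X \<Longrightarrow> hm A Y \<Longrightarrow> fst Y = fst X \<Longrightarrow> padd A (psub A X Y) Y = X"
proof -
  assume h: "hm A X" "hm A Y" "fst Y = fst X"
  have "padd A (psub A X Y) Y = padd A X (padd A (psc A (-1) Y) Y)"
    using h by (simp add: psub_def padd_assoc)
  also have "\<dots> = padd A X (pz A (fst X))"
    using h padd_neg[of Y] padd_comm[of Y "psc A (-1) Y"] by simp
  finally show ?thesis using h by simp
qed

lemma psub_self[simp]: "hm A X \<Longrightarrow> psub A X X = pz A (fst X)"
  by (simp add: psub_def padd_neg)

lemma add_psub: "hm A X \<Longrightarrow> hm A Y \<Longrightarrow> fst Y = fst X \<Longrightarrow> psub A (padd A X Y) Y = X"
proof -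
  assume h: "hm A X" "hm A Y" "fst Y = fst X"
  have "psub A (padd A X Y) Y = padd A X (padd A Y (psc A (-1) Y))"
    using h by (simp add: psub_def padd_assoc)
  also have "\<dots> = X" using h padd_neg[of Y] by simp
  finally show ?thesis .
qed

lemma psub_cancel: "hm A P \<Longrightarrow> hm A R \<Longrightarrow> hm A Q \<Longrightarrow> fst R = fst P \<Longrightarrow> fst Q = fst P \<Longrightarrow>
   psub A (padd A P R) (padd A P Q) = psub A R Q"
proof -
  assume h: "hm A P" "hm A R" "hm A Q" "fst R = fst P" "fst Q = fst P"
  have "psub A (padd A P R) (padd A P Q) = padd A (padd A P (psc A (-1) P)) (psub A R Q)"
    using h by (simp add: psub_def AC)
  also have "\<dots> = psub A R Q" using h by (simp add: padd_neg)
  finally show ?thesis .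
qed

lemma pd_psub[simp]: "hm A X \<Longrightarrow> hm A Y \<Longrightarrow> fst Y = fst X \<Longrightarrow> pd A (psub A X Y) = psub A (pd A X) (pd A Y)"
  by (simp add: psub_def)

lemma pmul_psub_r: "hm A X \<Longrightarrow> hm A Y \<Longrightarrow> hm A Y' \<Longrightarrow> fst Y' = fst Y \<Longrightarrow>
   pmul A X (psub A Y Y') = psub A (pmul A X Y) (pmul A X Y')"
  by (simp add: psub_def)
lemma pmul_psub_l: "hm A X \<Longrightarrow> hm A X' \<Longrightarrow> hm A Y \<Longrightarrow> fst X' = fst X \<Longrightarrow>
   pmul A (psub A X X') Y = psub A (pmul A X Y) (pmul A X' Y)"
  by (simp add: psub_def)

lemma cyc_hm: "cyc A X \<Longrightarrow> hm A X" by (simp add: cyc_def)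
lemma cyc_d: "cyc A X \<Longrightarrow> pd A X = pz A (fst X + 1)" by (simp add: cyc_def)
lemma cyc_pz[simp]: "cyc A (pz A i)" by (simp add: cyc_def)
lemma cyc_padd: "cyc A X \<Longrightarrow> cyc A Y \<Longrightarrow> fst Y = fst X \<Longrightarrow> cyc A (padd A X Y)"
  by (simp add: cyc_def)
lemma cyc_psc: "cyc A X \<Longrightarrow> cyc A (psc A c X)"
  by (simp add: cyc_def)
lemma cyc_psub: "cyc A X \<Longrightarrow> cyc A Y \<Longrightarrow> fst Y = fst X \<Longrightarrow> cyc A (psub A X Y)"
  by (simp add: psub_def cyc_padd cyc_psc)
lemma cyc_pmul: "cyc A X \<Longrightarrow> cyc A Y \<Longrightarrow> cyc A (pmul A X Y)"
  by (simp add: cyc_def pd_pmul add.commute add.left_commute)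
lemma cyc_exact: "exact A X \<Longrightarrow> cyc A X"
  by (auto simp add: exact_def cyc_def add.assoc)
lemma exact_hm: "exact A X \<Longrightarrow> hm A X" by (auto simp add: exact_def)
lemma exact_pd[simp]: "hm A e \<Longrightarrow> exact A (pd A e)" unfolding exact_def by blast
lemma exact_pz[simp]: "exact A (pz A i)"
  unfolding exact_def by (rule exI[of _ "pz A (i - 1)"]) simp
lemma exact_padd: assumes "exact A X" "exact A Y" "fst Y = fst X" shows "exact A (padd A X Y)"
proof -
  obtain e e' where e: "hm A e" "X = pd A e" "hm A e'" "Y = pd A e'" using assms exact_def by metis
  have "fst e' = fst e" using e assms by simp
  then have "padd A X Y = pd A (padd A e e')" using e by simp
  then show ?thesis using e \<open>fst e' = fst e\<close> unfolding exact_def by (intro exI[of _ "padd A e e'"]) simp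
qed
lemma exact_psc: assumes "exact A X" shows "exact A (psc A c X)"
proof -
  obtain e where e: "hm A e" "X = pd A e" using assms exact_def by metis
  then show ?thesis unfolding exact_def by (intro exI[of _ "psc A c e"]) simp
qed
lemma exact_psub: "exact A X \<Longrightarrow> exact A Y \<Longrightarrow> fst Y = fst X \<Longrightarrow> exact A (psub A X Y)"
  by (simp add: psub_def exact_padd exact_psc)

lemma cyc_mul_d: "cyc A a \<Longrightarrow> hm A e \<Longrightarrow> pmul A a (pd A e) = pd A (psc A (psign (fst a)) (pmul A a e))"
  by (simp add: cyc_def pd_pmul)
lemma d_mul_cyc: "cyc A c \<Longrightarrow> hm A e \<Longrightarrow> pmul A (pd A e) c = pd A (pmul A e c)"
  by (simp add: cyc_def pd_pmul)
lemma exact_mul_l: assumes "cyc A a" "exact A X" shows "exact A (pmul A a X)"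
proof -
  obtain e where e: "hm A e" "X = pd A e" using assms exact_def by metis
  then show ?thesis using assms cyc_mul_d cyc_hm unfolding exact_def
    by (intro exI[of _ "psc A (psign (fst a)) (pmul A a e)"]) simp
qed
lemma exact_mul_r: assumes "cyc A c" "exact A X" shows "exact A (pmul A X c)"
proof -
  obtain e where e: "hm A e" "X = pd A e" using assms exact_def by metis
  then show ?thesis using assms d_mul_cyc cyc_hm unfolding exact_def
    by (intro exI[of _ "pmul A e c"]) simp
qed

lemma IE_hm: "IE A a c X \<Longrightarrow> hm A X" by (simp add: IE_def)

lemma IE_add_eq: "hm A a \<Longrightarrow> hm A z \<Longrightarrow> hm A z' \<Longrightarrow> hm A w \<Longrightarrow> hm A w' \<Longrightarrow> hm A c \<Longrightarrow> hm A e \<Longrightarrow> hm A e' \<Longrightarrow>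
  fst z' = fst z \<Longrightarrow> fst w' = fst w \<Longrightarrow> fst e' = fst e \<Longrightarrow> fst w + fst c = fst a + fst z \<Longrightarrow> fst e + 1 = fst a + fst z \<Longrightarrow>
  padd A (padd A (padd A (pmul A a z) (pmul A w c)) (pd A e)) (padd A (padd A (pmul A a z') (pmul A w' c)) (pd A e'))
  = padd A (padd A (pmul A a (padd A z z')) (pmul A (padd A w w') c)) (pd A (padd A e e'))"
  by (simp add: AC)

lemma IE_add: assumes a: "cyc A a" and c: "cyc A c" and X: "IE A a c X" and Y: "IE A a c Y"
  and f: "fst Y = fst X" shows "IE A a c (padd A X Y)"
proof -
  obtain z w e where zwe: "cyc A z" "cyc A w" "hm A e" "fst a + fst z = fst X"
      "fst w + fst c = fst X" "fst e + 1 = fst X"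
      "X = padd A (padd A (pmul A a z) (pmul A w c)) (pd A e)"
    using X unfolding IE_def by blast
  obtain z' w' e' where zwe': "cyc A z'" "cyc A w'" "hm A e'" "fst a + fst z' = fst Y"
      "fst w' + fst c = fst Y" "fst e' + 1 = fst Y"
      "Y = padd A (padd A (pmul A a z') (pmul A w' c)) (pd A e')"
    using Y unfolding IE_def by blast
  have hs: "hm A a" "hm A c" "hm A z" "hm A w" "hm A z'" "hm A w'" using zwe zwe' a c cyc_hm by auto
  have fz: "fst z' = fst z" "fst w' = fst w" "fst e' = fst e" using zwe zwe' f by linarith+
  show ?thesis unfolding IE_def
  proof (intro conjI exI)
    show "hm A (padd A X Y)" using X Y f IE_hm by simp
    show "cyc A (padd A z z')" "cyc A (padd A w w')" "hm A (padd A e e')"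
      using zwe zwe' fz cyc_padd by auto
    show "fst a + fst (padd A z z') = fst (padd A X Y)" "fst (padd A w w') + fst c = fst (padd A X Y)"
      "fst (padd A e e') + 1 = fst (padd A X Y)" using zwe by auto
    show "padd A X Y = padd A (padd A (pmul A a (padd A z z')) (pmul A (padd A w w') c)) (pd A (padd A e e'))"
      unfolding zwe(7) zwe'(7) using IE_add_eq[of a z z' w w' c e e'] zwe(3) zwe'(3) hs fz zwe(4,5,6) by simp
  qed
qed

lemma IE_sc: assumes a: "cyc A a" and c: "cyc A c" and X: "IE A a c X"
  shows "IE A a c (psc A k X)"
proof -
  obtain z w e where zwe: "cyc A z" "cyc A w" "hm A e" "fst a + fst z = fst X"
      "fst w + fst c = fst X" "fst e + 1 = fst X"
      "X = padd A (padd A (pmul A a z) (pmul A w c)) (pd A e)"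
    using X unfolding IE_def by blast
  have hs: "hm A a" "hm A c" "hm A z" "hm A w" using zwe a c cyc_hm by auto
  show ?thesis unfolding IE_def
  proof (intro conjI exI)
    show "hm A (psc A k X)" using X IE_hm by simp
    show "cyc A (psc A k z)" "cyc A (psc A k w)" "hm A (psc A k e)"
      using zwe cyc_psc by auto
    show "fst a + fst (psc A k z) = fst (psc A k X)" "fst (psc A k w) + fst c = fst (psc A k X)"
      "fst (psc A k e) + 1 = fst (psc A k X)" using zwe by auto
    show "psc A k X = padd A (padd A (pmul A a (psc A k z)) (pmul A (psc A k w) c)) (pd A (psc A k e))"
      using zwe hs by simp
  qed
qed

lemma IE_psub: "cyc A a \<Longrightarrow> cyc A c \<Longrightarrow> IE A a c X \<Longrightarrow> IE A a c Y \<Longrightarrow> fst Y = fst X \<Longrightarrow> IE A a c (psub A X Y)"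
  unfolding psub_def by (rule IE_add) (auto intro: IE_sc)

lemma IE_az: assumes a: "cyc A a" and c: "cyc A c" and z: "cyc A z"
  shows "IE A a c (pmul A a z)"
  unfolding IE_def
proof (intro conjI exI)
  show "hm A (pmul A a z)" using a z cyc_hm by simp
  show "cyc A z" "cyc A (pz A (fst a + fst z - fst c))" "hm A (pz A (fst a + fst z - 1))" using z by auto
  show "fst a + fst z = fst (pmul A a z)" "fst (pz A (fst a + fst z - fst c)) + fst c = fst (pmul A a z)"
      "fst (pz A (fst a + fst z - 1)) + 1 = fst (pmul A a z)" by auto
  show "pmul A a z = padd A (padd A (pmul A a z) (pmul A (pz A (fst a + fst z - fst c)) c)) (pd A (pz A (fst a + fst z - 1)))"
    using a c z cyc_hm by simp
qed

lemma IE_wc: assumes a: "cyc A a" and c: "cyc A c" and w: "cyc A w"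
  shows "IE A a c (pmul A w c)"
  unfolding IE_def
proof (intro conjI exI)
  show "hm A (pmul A w c)" using c w cyc_hm by simp
  show "cyc A (pz A (fst w + fst c - fst a))" "cyc A w" "hm A (pz A (fst w + fst c - 1))" using w by auto
  show "fst a + fst (pz A (fst w + fst c - fst a)) = fst (pmul A w c)" "fst w + fst c = fst (pmul A w c)"
      "fst (pz A (fst w + fst c - 1)) + 1 = fst (pmul A w c)" by auto
  show "pmul A w c = padd A (padd A (pmul A a (pz A (fst w + fst c - fst a))) (pmul A w c)) (pd A (pz A (fst w + fst c - 1)))"
    using a c w cyc_hm by simp
qed

lemma IE_ex: assumes a: "cyc A a" and c: "cyc A c" and X: "exact A X"
  shows "IE A a c X"
proof -
  obtain e where e: "hm A e" "X = pd A e" using X exact_def by blast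
  show ?thesis unfolding IE_def
  proof (intro conjI exI)
    show "hm A X" using e by simp
    show "cyc A (pz A (fst X - fst a))" "cyc A (pz A (fst X - fst c))" "hm A e" using e by auto
    show "fst a + fst (pz A (fst X - fst a)) = fst X" "fst (pz A (fst X - fst c)) + fst c = fst X"
      "fst e + 1 = fst X" using e by auto
    show "X = padd A (padd A (pmul A a (pz A (fst X - fst a))) (pmul A (pz A (fst X - fst c)) c)) (pd A e)"
      using a c e cyc_hm by simp
  qed
qed

end

context pc begin

lemma SA: "cyc A b \<Longrightarrow> hm A u \<Longrightarrow> hm A a \<Longrightarrow> hm A al \<Longrightarrow> pd A u = pmul A a b \<Longrightarrow>
   fst al = fst a - 1 \<Longrightarrow> fst u = fst a + fst b - 1 \<Longrightarrow>
   pd A (padd A u (pmul A al b)) = pmul A (padd A a (pd A al)) b"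
  by (simp add: pd_pmul cyc_d cyc_hm)

lemma SB: "cyc A a \<Longrightarrow> hm A u \<Longrightarrow> hm A b \<Longrightarrow> hm A be \<Longrightarrow> pd A u = pmul A a b \<Longrightarrow>
   fst be = fst b - 1 \<Longrightarrow> fst u = fst a + fst b - 1 \<Longrightarrow>
   pd A (padd A u (psc A (psign (fst a)) (pmul A a be))) = pmul A a (padd A b (pd A be))"
  by (simp add: pd_pmul cyc_d cyc_hm)

lemma SC: "cyc A c \<Longrightarrow> hm A v \<Longrightarrow> hm A b \<Longrightarrow> hm A be \<Longrightarrow> pd A v = pmul A b c \<Longrightarrow>
   fst be = fst b - 1 \<Longrightarrow> fst v = fst b + fst c - 1 \<Longrightarrow>
   pd A (padd A v (pmul A be c)) = pmul A (padd A b (pd A be)) c"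
  by (simp add: pd_pmul cyc_d cyc_hm)

lemma SD: "cyc A b \<Longrightarrow> hm A v \<Longrightarrow> hm A c \<Longrightarrow> hm A ga \<Longrightarrow> pd A v = pmul A b c \<Longrightarrow>
   fst ga = fst c - 1 \<Longrightarrow> fst v = fst b + fst c - 1 \<Longrightarrow>
   pd A (padd A v (psc A (psign (fst b)) (pmul A b ga))) = pmul A b (padd A c (pd A ga))"
  by (simp add: pd_pmul cyc_d cyc_hm)

lemma VA: "hm A a \<Longrightarrow> hm A b \<Longrightarrow> hm A c \<Longrightarrow> hm A u \<Longrightarrow> hm A v \<Longrightarrow> hm A al \<Longrightarrow>
   pd A v = pmul A b c \<Longrightarrow>
   fst al = fst a - 1 \<Longrightarrow> fst u = fst a + fst b - 1 \<Longrightarrow> fst v = fst b + fst c - 1 \<Longrightarrow>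
   Val A (padd A a (pd A al)) c (padd A u (pmul A al b)) v
   = padd A (Val A a c u v) (pd A (psc A (- psign (fst a)) (pmul A al v)))"
  unfolding Val_def by (simp add: pd_pmul AC)

lemma VB: assumes h: "hm A a" "hm A b" "hm A c" "hm A u" "hm A v" "hm A be"
   "fst be = fst b - 1" "fst u = fst a + fst b - 1" "fst v = fst b + fst c - 1"
  shows "Val A a c (padd A u (psc A (psign (fst a)) (pmul A a be))) (padd A v (pmul A be c))
   = Val A a c u v"
proof -
  let ?M = "pmul A a (pmul A be c)"
  have "Val A a c (padd A u (psc A (psign (fst a)) (pmul A a be))) (padd A v (pmul A be c))
     = padd A (Val A a c u v) (padd A (psc A (psign (fst a)) ?M) (psc A (- psign (fst a)) ?M))"
    unfolding Val_def using h by (simp add: AC)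
  also have "padd A (psc A (psign (fst a)) ?M) (psc A (- psign (fst a)) ?M) = pz A (fst ?M)"
    using h by (simp add: padd_psc_same)
  also have "padd A (Val A a c u v) (pz A (fst ?M)) = Val A a c u v"
    using h unfolding Val_def by simp
  finally show ?thesis .
qed

lemma VC: "hm A a \<Longrightarrow> hm A b \<Longrightarrow> hm A c \<Longrightarrow> hm A u \<Longrightarrow> hm A v \<Longrightarrow> hm A ga \<Longrightarrow>
   pd A u = pmul A a b \<Longrightarrow>
   fst ga = fst c - 1 \<Longrightarrow> fst u = fst a + fst b - 1 \<Longrightarrow> fst v = fst b + fst c - 1 \<Longrightarrow>
   Val A a (padd A c (pd A ga)) u (padd A v (psc A (psign (fst b)) (pmul A b ga)))
   = padd A (Val A a c u v) (pd A (psc A (- (psign (fst a) * psign (fst b))) (pmul A u ga)))"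
  unfolding Val_def by (simp add: pd_pmul AC mult_ac)

lemma VD: "hm A a \<Longrightarrow> hm A c \<Longrightarrow> hm A u \<Longrightarrow> hm A v \<Longrightarrow> hm A u0 \<Longrightarrow> hm A v0 \<Longrightarrow>
   fst u0 = fst u \<Longrightarrow> fst v0 = fst v \<Longrightarrow> fst u + fst c = fst a + fst v \<Longrightarrow>
   Val A a c (padd A u u0) (padd A v v0)
   = padd A (Val A a c u v) (padd A (pmul A u0 c) (psc A (- psign (fst a)) (pmul A a v0)))"
  unfolding Val_def by (simp add: AC)

end

context pc begin

lemma IE_transfer: assumes a: "cyc A a" and c: "cyc A c" and h: "hm A al" "hm A ga"
  "fst al = fst a - 1" "fst ga = fst c - 1"
  and X: "IE A (padd A a (pd A al)) (padd A c (pd A ga)) X"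
  shows "IE A a c X"
proof -
  obtain z w e where zwe: "cyc A z" "cyc A w" "hm A e" "fst a + fst z = fst X"
      "fst w + fst c = fst X" "fst e + 1 = fst X"
      "X = padd A (padd A (pmul A (padd A a (pd A al)) z) (pmul A w (padd A c (pd A ga)))) (pd A e)"
    using X unfolding IE_def by auto
  have hs: "hm A a" "hm A c" "hm A z" "hm A w" using zwe a c cyc_hm by auto
  let ?E = "padd A (padd A (pmul A al z) (psc A (psign (fst w)) (pmul A w ga))) e"
  have eq: "X = padd A (padd A (pmul A a z) (pmul A w c)) (pd A ?E)"
    unfolding zwe(7) using hs h zwe(1-6) by (simp add: pd_pmul cyc_d AC)
  show ?thesis unfolding IE_def
  proof (intro conjI exI)
    show "hm A X" using X IE_hm by blast
    show "cyc A z" "cyc A w" using zwe by auto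
    show "hm A ?E" using hs h zwe by simp
    show "fst a + fst z = fst X" "fst w + fst c = fst X" "fst ?E + 1 = fst X" using zwe h by auto
    show "X = padd A (padd A (pmul A a z) (pmul A w c)) (pd A ?E)" by (rule eq)
  qed
qed

lemma MQ_zero: assumes z: "\<forall>X. hm A X \<longrightarrow> pd A X = pz A (fst X + 1)" shows "MQ A"
  unfolding MQ_def
proof (intro allI impI)
  fix a b c u v
  assume a: "cyc A a" and b: "cyc A b" and c: "cyc A c" and u: "hm A u" and v: "hm A v"
    and du: "pd A u = pmul A a b" and dv: "pd A v = pmul A b c"
  have hs: "hm A a" "hm A b" "hm A c" using a b c cyc_hm by auto
  have fu: "fst u = fst a + fst b - 1" using du by (metis fst_ops(4,5) add_diff_cancel_right')
  have fv: "fst v = fst b + fst c - 1" using dv by (metis fst_ops(4,5) add_diff_cancel_right')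
  let ?V = "Val A a c u v"
  show "IE A a c ?V" unfolding IE_def
  proof (intro conjI exI)
    show "hm A ?V" using hs u v fu fv unfolding Val_def by simp
    show "cyc A (psc A (- psign (fst a)) v)" "cyc A u" "hm A (pz A (fst ?V - 1))"
      using z[rule_format, OF u] z[rule_format, OF v] u v unfolding cyc_def by auto
    show "fst a + fst (psc A (- psign (fst a)) v) = fst ?V" "fst u + fst c = fst ?V"
      "fst (pz A (fst ?V - 1)) + 1 = fst ?V" using fu fv unfolding Val_def by auto
    show "?V = padd A (padd A (pmul A a (psc A (- psign (fst a)) v)) (pmul A u c)) (pd A (pz A (fst ?V - 1)))"
      using hs u v fu fv unfolding Val_def by (simp add: AC)
  qed
qed

end

definition FF :: "(int \<Rightarrow> 'a \<Rightarrow> 'b) \<Rightarrow> int \<times> 'a \<Rightarrow> int \<times> 'b" where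
  "FF f X = (fst X, f (fst X) (snd X))"

lemma fst_FF[simp]: "fst (FF f X) = fst X" by (simp add: FF_def)

locale qi = fixes B :: "('k::field, 'a) cdga" and C :: "('k, 'b) cdga" and f
  assumes q: "quasi_iso B C f"
begin

sublocale B: pc B using q unfolding quasi_iso_def pc_def by blast
sublocale C: pc C using q unfolding quasi_iso_def pc_def by blast

lemma hom: "cdga_hom B C f" using q unfolding quasi_iso_def by blast

lemma F_hm[simp]: "hm B X \<Longrightarrow> hm C (FF f X)"
  using hom unfolding cdga_hom_def hm_def FF_def by auto
lemma F_padd[simp]: "hm B X \<Longrightarrow> hm B Y \<Longrightarrow> fst Y = fst X \<Longrightarrow> FF f (padd B X Y) = padd C (FF f X) (FF f Y)"
  using hom unfolding cdga_hom_def hm_def FF_def padd_def by auto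
lemma F_psc[simp]: "hm B X \<Longrightarrow> FF f (psc B k X) = psc C k (FF f X)"
  using hom unfolding cdga_hom_def hm_def FF_def psc_def by auto
lemma F_pmul[simp]: "hm B X \<Longrightarrow> hm B Y \<Longrightarrow> FF f (pmul B X Y) = pmul C (FF f X) (FF f Y)"
  using hom unfolding cdga_hom_def hm_def FF_def pmul_def by auto
lemma F_pd[simp]: "hm B X \<Longrightarrow> FF f (pd B X) = pd C (FF f X)"
  using hom unfolding cdga_hom_def hm_def FF_def pd_def by auto
lemma F_pz[simp]: "FF f (pz B i) = pz C i"
proof -
  have "FF f (pz B i) = FF f (psc B 0 (pz B i))" by simp
  also have "\<dots> = psc C 0 (FF f (pz B i))" by (rule F_psc) simp
  also have "\<dots> = pz C i" by (simp add: C.psc_zero)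
  finally show ?thesis .
qed
lemma F_psub[simp]: "hm B X \<Longrightarrow> hm B Y \<Longrightarrow> fst Y = fst X \<Longrightarrow> FF f (psub B X Y) = psub C (FF f X) (FF f Y)"
  unfolding psub_def by simp

lemma F_cyc: "cyc B X \<Longrightarrow> cyc C (FF f X)"
  unfolding cyc_def by (metis F_hm F_pd F_pz fst_FF)
lemma F_exact: "exact B X \<Longrightarrow> exact C (FF f X)"
  unfolding exact_def by (metis F_hm F_pd)

lemma F_Val: "hm B a \<Longrightarrow> hm B c \<Longrightarrow> hm B u \<Longrightarrow> hm B v \<Longrightarrow> fst u + fst c = fst a + fst v \<Longrightarrow>
  FF f (Val B a c u v) = Val C (FF f a) (FF f c) (FF f u) (FF f v)"
  unfolding Val_def by simp

lemma F_IE: assumes "IE B a c X" "hm B a" "hm B c" shows "IE C (FF f a) (FF f c) (FF f X)"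
proof -
  obtain z w e where zwe: "cyc B z" "cyc B w" "hm B e" "fst a + fst z = fst X"
      "fst w + fst c = fst X" "fst e + 1 = fst X"
      "X = padd B (padd B (pmul B a z) (pmul B w c)) (pd B e)"
    using assms unfolding IE_def by auto
  have hz: "hm B z" "hm B w" using zwe B.cyc_hm by auto
  show ?thesis unfolding IE_def
  proof (intro conjI exI)
    show "hm C (FF f X)" using assms B.IE_hm by simp
    show "cyc C (FF f z)" "cyc C (FF f w)" "hm C (FF f e)" using zwe F_cyc by auto
    show "fst (FF f a) + fst (FF f z) = fst (FF f X)" "fst (FF f w) + fst (FF f c) = fst (FF f X)"
      "fst (FF f e) + 1 = fst (FF f X)" using zwe by auto
    show "FF f X = padd C (padd C (pmul C (FF f a) (FF f z)) (pmul C (FF f w) (FF f c))) (pd C (FF f e))"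
      unfolding zwe(7) using zwe hz assms by simp
  qed
qed

lemma inj_F: assumes X: "cyc B X" and E: "exact C (FF f X)" shows "exact B X"
proof -
  obtain i x where Xe: "X = (i, x)" by fastforce
  have x: "x \<in> cocyc B i" using X unfolding Xe cyc_def cocyc_def hm_def pd_def pz_def by simp
  obtain e where e: "hm C e" "FF f X = pd C e" using E exact_def by blast
  have fe: "fst e = i - 1" using e(2) unfolding Xe by (metis fst_FF fst_ops(5) fst_conv add_diff_cancel_right')
  have "f i x = df C (i - 1) (snd e)" using e(2) fe unfolding Xe FF_def pd_def by simp
  then have "f i x \<in> cobdry C i" using e(1) fe unfolding cobdry_def hm_def by auto
  then have "x \<in> cobdry B i" using q x unfolding quasi_iso_def by blast
  then obtain e' where e': "e' \<in> cmp B (i - 1)" "x = df B (i - 1) e'" unfolding cobdry_def by auto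
  show ?thesis unfolding exact_def
    by (rule exI[of _ "(i - 1, e')"]) (simp add: Xe e' hm_def pd_def)
qed

lemma surj_F: assumes W: "cyc C W" shows "\<exists>Z. cyc B Z \<and> fst Z = fst W \<and> exact C (psub C (FF f Z) W)"
proof -
  obtain i w where We: "W = (i, w)" by fastforce
  have w: "w \<in> cocyc C i" using W unfolding We cyc_def cocyc_def hm_def pd_def pz_def by simp
  then obtain z where z: "z \<in> cocyc B i" "ad C i (f i z) (sc C i (-1) w) \<in> cobdry C i"
    using q unfolding quasi_iso_def by blast
  then obtain e where e: "e \<in> cmp C (i - 1)" "ad C i (f i z) (sc C i (-1) w) = df C (i - 1) e"
    unfolding cobdry_def by auto
  show ?thesis
  proof (intro exI conjI)
    show "cyc B (i, z)" using z(1) unfolding cyc_def cocyc_def hm_def pd_def pz_def by simp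
    show "fst (i, z) = fst W" using We by simp
    show "exact C (psub C (FF f (i, z)) W)" unfolding exact_def
      by (rule exI[of _ "(i - 1, e)"]) (simp add: We e psub_def padd_def psc_def FF_def hm_def pd_def)
  qed
qed

end


lemma pd_fst: "pd A u = pmul A a b \<Longrightarrow> fst u = fst a + fst b - 1"
  by (metis fst_ops(4,5) add_diff_cancel_right')

context pc begin
lemma Val_cyc: assumes a: "cyc A a" and b: "cyc A b" and c: "cyc A c" and u: "hm A u" and v: "hm A v"
  and du: "pd A u = pmul A a b" and dv: "pd A v = pmul A b c"
  shows "cyc A (Val A a c u v)"
proof -
  have hs: "hm A a" "hm A b" "hm A c" using a b c cyc_hm by auto
  have fu: "fst u = fst a + fst b - 1" and fv: "fst v = fst b + fst c - 1" using du dv pd_fst by blast+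
  show ?thesis unfolding cyc_def Val_def using hs u v fu fv a c du dv
    by (simp add: pd_pmul cyc_d padd_neg)
qed
end

context qi begin

lemma MQ_back: assumes M: "MQ C" shows "MQ B"
  unfolding MQ_def
proof (intro allI impI)
  fix a b c u v
  assume a: "cyc B a" and b: "cyc B b" and c: "cyc B c" and u: "hm B u" and v: "hm B v"
    and du: "pd B u = pmul B a b" and dv: "pd B v = pmul B b c"
  have hs: "hm B a" "hm B b" "hm B c" using a b c B.cyc_hm by auto
  have fu: "fst u = fst a + fst b - 1" and fv: "fst v = fst b + fst c - 1" using du dv pd_fst by blast+
  let ?V = "Val B a c u v"
  have Vc: "cyc B ?V" using B.Val_cyc a b c u v du dv .
  have "IE C (FF f a) (FF f c) (Val C (FF f a) (FF f c) (FF f u) (FF f v))"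
    using M unfolding MQ_def
    using F_cyc[OF a] F_cyc[OF b] F_cyc[OF c] F_hm[OF u] F_hm[OF v] hs u v du dv
    by (metis F_pd F_pmul)
  then have IEV: "IE C (FF f a) (FF f c) (FF f ?V)" using F_Val hs u v fu fv by simp
  obtain z w e where zwe: "cyc C z" "cyc C w" "hm C e" "fst a + fst z = fst ?V"
      "fst w + fst c = fst ?V" "fst e + 1 = fst ?V"
      "FF f ?V = padd C (padd C (pmul C (FF f a) z) (pmul C w (FF f c))) (pd C e)"
    using IEV unfolding IE_def by auto
  obtain z0 where z0: "cyc B z0" "fst z0 = fst z" "exact C (psub C (FF f z0) z)"
    using surj_F zwe(1) by blast
  obtain w0 where w0: "cyc B w0" "fst w0 = fst w" "exact C (psub C (FF f w0) w)"
    using surj_F zwe(2) by blast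
  obtain ze where ze: "hm C ze" "psub C (FF f z0) z = pd C ze" using z0(3) exact_def by blast
  obtain we where we: "hm C we" "psub C (FF f w0) w = pd C we" using w0(3) exact_def by blast
  have hz: "hm C z" "hm C w" "hm B z0" "hm B w0" using zwe z0 w0 C.cyc_hm B.cyc_hm by auto
  have Fz0: "FF f z0 = padd C (pd C ze) z"
    using C.psub_add[of "FF f z0" z] hz z0 ze by simp
  have Fw0: "FF f w0 = padd C (pd C we) w"
    using C.psub_add[of "FF f w0" w] hz w0 we by simp
  have fze: "fst ze = fst z - 1" "fst we = fst w - 1" using ze we z0 w0
    by (metis fst_FF fst_ops(5) fst_psub add_diff_cancel_right')+
  let ?Y = "padd B (pmul B a z0) (pmul B w0 c)"
  let ?V' = "psub B ?V ?Y"
  let ?P = "padd C (pmul C (FF f a) z) (pmul C w (FF f c))"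
  let ?Q = "padd C (pmul C (FF f a) (pd C ze)) (pmul C (pd C we) (FF f c))"
  have hV: "hm B ?V" using Vc B.cyc_hm by blast
  have fV: "fst ?V = fst a + fst b + fst c - 1" unfolding Val_def using fu by simp
  have fY: "fst ?Y = fst ?V" using zwe z0 fV by simp
  have hY: "hm B ?Y" using hs hz z0 w0 zwe fV by simp
  have FY: "FF f ?Y = padd C ?P ?Q"
    using hs hz z0(1,2) w0(1,2) zwe fV fze ze(1) we(1) by (simp add: C.AC Fz0 Fw0)
  have FV': "FF f ?V' = psub C (pd C e) ?Q"
  proof -
    have "FF f ?V' = psub C (FF f ?V) (FF f ?Y)" using hV hY fY by simp
    also have "\<dots> = psub C (padd C ?P (pd C e)) (padd C ?P ?Q)" using zwe(7) FY by simp
    also have "\<dots> = psub C (pd C e) ?Q"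
      using C.psub_cancel hs hz zwe fze ze we fV by simp
    finally show ?thesis .
  qed
  have "exact C (FF f ?V')" unfolding FV'
    using zwe fze ze we hs fV C.exact_mul_l[OF F_cyc[OF a]] C.exact_mul_r[OF F_cyc[OF c]]
    by (intro C.exact_psub C.exact_padd) auto
  moreover have "cyc B ?V'"
    using B.cyc_psub[OF Vc B.cyc_padd[OF B.cyc_pmul[OF a z0(1)] B.cyc_pmul[OF w0(1) c]]] fY zwe z0 w0 by simp
  ultimately have eV': "exact B ?V'" using inj_F by blast
  have eq: "?V = padd B ?V' ?Y" using B.psub_add hV hY fY by simp
  have i1: "IE B a c ?V'" using B.IE_ex a c eV' by blast
  have i2: "IE B a c ?Y" using B.IE_add B.IE_az B.IE_wc a c z0 w0 fY zwe by simp
  have "IE B a c (padd B ?V' ?Y)" by (rule B.IE_add[OF a c i1 i2]) (use fY in simp)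
  then show "IE B a c ?V" using eq by simp
qed

lemma lift: assumes "cyc C a" obtains a0 al where "cyc B a0" "hm C al" "fst a0 = fst a"
  "fst al = fst a - 1" "FF f a0 = padd C a (pd C al)"
proof -
  obtain a0 where a0: "cyc B a0" "fst a0 = fst a" "exact C (psub C (FF f a0) a)"
    using surj_F assms by blast
  obtain al where al: "hm C al" "psub C (FF f a0) a = pd C al" using a0(3) exact_def by blast
  have h: "hm C a" "hm B a0" using assms a0 C.cyc_hm B.cyc_hm by auto
  have fal: "fst al = fst a - 1" using al a0
    by (metis fst_FF fst_ops(5) fst_psub add_diff_cancel_right')
  have "FF f a0 = padd C (pd C al) a"
    using C.psub_add[of "FF f a0" a] h a0 al by simp
  also have "\<dots> = padd C a (pd C al)" using C.padd_comm h al fal by simp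
  finally show ?thesis using that a0 al fal by blast
qed

lemma MQ_fwd: assumes M: "MQ B" shows "MQ C"
  unfolding MQ_def
proof (intro allI impI)
  fix a b c u v
  assume a: "cyc C a" and b: "cyc C b" and c: "cyc C c" and u: "hm C u" and v: "hm C v"
    and du: "pd C u = pmul C a b" and dv: "pd C v = pmul C b c"
  have hs: "hm C a" "hm C b" "hm C c" using a b c C.cyc_hm by auto
  have fu: "fst u = fst a + fst b - 1" and fv: "fst v = fst b + fst c - 1" using du dv pd_fst by blast+
  obtain a0 al where A0: "cyc B a0" "hm C al" "fst a0 = fst a" "fst al = fst a - 1" "FF f a0 = padd C a (pd C al)"
    using lift[OF a] by blast
  obtain b0 be where B0: "cyc B b0" "hm C be" "fst b0 = fst b" "fst be = fst b - 1" "FF f b0 = padd C b (pd C be)"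
    using lift[OF b] by blast
  obtain c0 ga where C0: "cyc B c0" "hm C ga" "fst c0 = fst c" "fst ga = fst c - 1" "FF f c0 = padd C c (pd C ga)"
    using lift[OF c] by blast
  define a' where "a' = padd C a (pd C al)"
  define b' where "b' = padd C b (pd C be)"
  define c' where "c' = padd C c (pd C ga)"
  have cyc': "cyc C a'" "cyc C b'" "cyc C c'" unfolding a'_def b'_def c'_def
    using a b c A0 B0 C0 C.cyc_padd C.cyc_exact C.exact_pd by simp_all
  have hs': "hm C a'" "hm C b'" "hm C c'" using cyc' C.cyc_hm by auto
  have f': "fst a' = fst a" "fst b' = fst b" "fst c' = fst c" unfolding a'_def b'_def c'_def by simp_all
  define u1 where "u1 = padd C u (pmul C al b)"
  define u2 where "u2 = padd C u1 (psc C (psign (fst a')) (pmul C a' be))"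
  define v1 where "v1 = padd C v (pmul C be c)"
  define v2 where "v2 = padd C v1 (psc C (psign (fst b')) (pmul C b' ga))"
  have hu: "hm C u1" "hm C u2" "hm C v1" "hm C v2" "fst u1 = fst u" "fst u2 = fst u" "fst v1 = fst v" "fst v2 = fst v"
    unfolding u2_def u1_def v2_def v1_def using hs hs' u v A0 B0 C0 fu fv f' by simp_all
  have du1: "pd C u1 = pmul C a' b" unfolding u1_def a'_def
    using C.SA b u hs A0 du fu by blast
  have du2: "pd C u2 = pmul C a' b'" unfolding u2_def b'_def
    using C.SB[OF cyc'(1) hu(1) hs(2) B0(2) du1] B0 fu hu f' by simp
  have dv1: "pd C v1 = pmul C b' c" unfolding v1_def b'_def
    using C.SC c v hs B0 dv fv by blast
  have dv2: "pd C v2 = pmul C b' c'" unfolding v2_def c'_def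
    using C.SD[OF cyc'(2) hu(3) hs(3) C0(2) dv1] C0 fv hu f' by simp
  have hB: "hm B a0" "hm B b0" "hm B c0" using A0 B0 C0 B.cyc_hm by auto
  have "exact C (FF f (pmul B a0 b0))" using hB A0 B0 du2 hu
    by (simp add: a'_def[symmetric] b'_def[symmetric]) (metis C.exact_pd)
  then have "exact B (pmul B a0 b0)" using inj_F B.cyc_pmul A0 B0 by blast
  then obtain u0 where u0: "hm B u0" "pd B u0 = pmul B a0 b0" using exact_def by metis
  have "exact C (FF f (pmul B b0 c0))" using hB B0 C0 dv2 hu
    by (simp add: b'_def[symmetric] c'_def[symmetric]) (metis C.exact_pd)
  then have "exact B (pmul B b0 c0)" using inj_F B.cyc_pmul B0 C0 by blast
  then obtain v0 where v0: "hm B v0" "pd B v0 = pmul B b0 c0" using exact_def by metis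
  have "IE B a0 c0 (Val B a0 c0 u0 v0)" using M A0 B0 C0 u0 v0 unfolding MQ_def by blast
  then have "IE C (FF f a0) (FF f c0) (FF f (Val B a0 c0 u0 v0))" using F_IE hB by blast
  moreover have "fst u0 = fst a + fst b - 1" "fst v0 = fst b + fst c - 1"
    using u0 v0 A0 B0 C0 pd_fst by metis+
  ultimately have IE4: "IE C a' c' (Val C a' c' (FF f u0) (FF f v0))"
    using F_Val hB u0 v0 A0 C0 by (simp add: a'_def[symmetric] c'_def[symmetric])
  define u0' where "u0' = psub C (FF f u0) u2"
  define v0' where "v0' = psub C (FF f v0) v2"
  have fu0: "fst (FF f u0) = fst u2" "fst (FF f v0) = fst v2" using hu fu fv
    \<open>fst u0 = fst a + fst b - 1\<close> \<open>fst v0 = fst b + fst c - 1\<close> by simp_all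
  have pu0: "pd C (FF f u0) = pmul C a' b'"
    using F_pd[OF u0(1), symmetric] u0(2) hB by (simp add: A0(5) B0(5) a'_def[symmetric] b'_def[symmetric])
  have pv0: "pd C (FF f v0) = pmul C b' c'"
    using F_pd[OF v0(1), symmetric] v0(2) hB by (simp add: C0(5) B0(5) c'_def[symmetric] b'_def[symmetric])
  have cu0': "cyc C u0'" unfolding u0'_def cyc_def using u0 hu fu0 du2 hB pu0 hs' f' fu by simp
  have cv0': "cyc C v0'" unfolding v0'_def cyc_def using v0 hu fu0 dv2 hB pv0 hs' f' fv by simp
  have hu0': "hm C u0'" "hm C v0'" using cu0' cv0' C.cyc_hm by auto
  have fu0': "fst u0' = fst u2" "fst v0' = fst v2" unfolding u0'_def v0'_def using fu0 by simp_all
  have Fu0: "FF f u0 = padd C u2 u0'" unfolding u0'_def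
    using C.psub_add[of "FF f u0" u2] C.padd_comm hu u0 fu0 by (simp add: C.padd_comm)
  have Fv0: "FF f v0 = padd C v2 v0'" unfolding v0'_def
    using C.psub_add[of "FF f v0" v2] C.padd_comm hu v0 fu0 by (simp add: C.padd_comm)
  let ?J = "padd C (pmul C u0' c') (psc C (- psign (fst a')) (pmul C a' v0'))"
  have V4: "Val C a' c' (FF f u0) (FF f v0) = padd C (Val C a' c' u2 v2) ?J"
    unfolding Fu0 Fv0 by (rule C.VD) (use hs' hu hu0' fu0 fu fv f' u0'_def v0'_def in simp_all)
  have IEJ: "IE C a' c' ?J"
    using C.IE_add[OF cyc'(1,3) C.IE_wc[OF cyc'(1,3) cu0'] C.IE_sc[OF cyc'(1,3) C.IE_az[OF cyc'(1,3) cv0']]]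
      hu fu fv f' u0'_def v0'_def \<open>fst u0 = fst a + fst b - 1\<close> \<open>fst v0 = fst b + fst c - 1\<close> by simp
  have fVal: "fst (Val C a' c' u2 v2) = fst a + fst b + fst c - 1" unfolding Val_def using hu fu f' by simp
  have IE3: "IE C a' c' (Val C a' c' u2 v2)"
  proof -
    have "Val C a' c' u2 v2 = psub C (Val C a' c' (FF f u0) (FF f v0)) ?J"
      unfolding V4 by (rule C.add_psub[symmetric]) (use hs' hu hu0' fu fv f' fu0' in \<open>simp_all add: Val_def\<close>)
    moreover have "IE C a' c' (psub C (Val C a' c' (FF f u0) (FF f v0)) ?J)"
      using C.IE_psub[OF cyc'(1,3) IE4 IEJ] hu fu fv f' fu0' V4 fVal by simp
    ultimately show ?thesis by simp
  qed
  let ?E3 = "psc C (- (psign (fst a') * psign (fst b'))) (pmul C u2 ga)"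
  have V3: "Val C a' c' u2 v2 = padd C (Val C a' c u2 v1) (pd C ?E3)"
    unfolding c'_def v2_def by (rule C.VC) (use hs' hs hu C0 du2 fu fv f' in simp_all)
  have IE2: "IE C a' c' (Val C a' c u2 v1)"
  proof -
    have "Val C a' c u2 v1 = psub C (Val C a' c' u2 v2) (pd C ?E3)"
      unfolding V3 using C.add_psub hs' hs hu C0 fu fv f' by (simp add: Val_def)
    moreover have "IE C a' c' (pd C ?E3)"
      by (rule C.IE_ex[OF cyc'(1,3)], rule C.exact_pd) (use hu C0 in simp)
    then have "IE C a' c' (psub C (Val C a' c' u2 v2) (pd C ?E3))"
      using C.IE_psub[OF cyc'(1,3) IE3] hu fu fv f' C0 fVal by simp
    ultimately show ?thesis by simp
  qed
  have V2: "Val C a' c u2 v1 = Val C a' c u1 v"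
    unfolding u2_def v1_def by (rule C.VB) (use hs' hs hu u v B0 fu fv f' in simp_all)
  let ?E1 = "psc C (- psign (fst a)) (pmul C al v)"
  have V1: "Val C a' c u1 v = padd C (Val C a c u v) (pd C ?E1)"
    unfolding a'_def u1_def by (rule C.VA) (use hs u v A0 dv fu fv in simp_all)
  have "IE C a' c' (Val C a c u v)"
  proof -
    have "Val C a c u v = psub C (Val C a' c u1 v) (pd C ?E1)"
      unfolding V1 using C.add_psub hs u v A0 fu fv by (simp add: Val_def)
    moreover have "IE C a' c' (pd C ?E1)"
      by (rule C.IE_ex[OF cyc'(1,3)], rule C.exact_pd) (use hs u v A0 in simp)
    then have "IE C a' c' (psub C (Val C a' c u1 v) (pd C ?E1))"
      using C.IE_psub[OF cyc'(1,3) IE2[unfolded V2]] hu hs u v fu fv f' A0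
      by (simp add: Val_def)
    ultimately show ?thesis by simp
  qed
  then show "IE C a c (Val C a c u v)" unfolding a'_def c'_def
    using C.IE_transfer a c A0 C0 by blast
qed

end


lemma MQ_cohom: assumes "is_cdga (cohom X)" shows "MQ (cohom X)"
proof -
  interpret pc "cohom X" using assms pc_def by blast
  show ?thesis
    by (rule MQ_zero) (auto simp: pd_def pz_def cohom_def)
qed

lemma qlink_MQ: assumes "qlink P Q" shows "MQ P \<longleftrightarrow> MQ Q"
  using assms unfolding qlink_def
proof
  assume "\<exists>f. quasi_iso P Q f"
  then obtain f where "quasi_iso P Q f" by blast
  then interpret qi P Q f by (simp add: qi_def)
  show ?thesis using MQ_back MQ_fwd by blast
next
  assume "\<exists>f. quasi_iso Q P f"
  then obtain f where "quasi_iso Q P f" by blast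
  then interpret qi Q P f by (simp add: qi_def)
  show ?thesis using MQ_back MQ_fwd by blast
qed

lemma qlink_cdga2: "qlink P Q \<Longrightarrow> is_cdga Q"
  unfolding qlink_def quasi_iso_def by blast

lemma formal_MQ: fixes T :: "('k::field, 'a) cdga" assumes "formal_in TYPE('z) T" shows "MQ T"
proof -
  obtain cs :: "('k::field, 'z) cdga list" where z: "zigzag_via cs T (cohom T)"
    using assms unfolding formal_in_def by blast
  show ?thesis
  proof (cases "cs = []")
    case True
    then have q: "qlink T (cohom T)" using z unfolding zigzag_via_def by simp
    then show ?thesis using qlink_MQ MQ_cohom qlink_cdga2 by blast
  next
    case False
    then have q0: "qlink T (hd cs)" and qk: "\<forall>k. Suc k < length cs \<longrightarrow> qlink (cs ! k) (cs ! Suc k)"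
      and ql: "qlink (last cs) (cohom T)"
      using z unfolding zigzag_via_def by auto
    have ind: "k < length cs \<Longrightarrow> (MQ T \<longleftrightarrow> MQ (cs ! k))" for k
    proof (induction k)
      case 0
      then show ?case using q0 qlink_MQ False by (simp add: hd_conv_nth)
    next
      case (Suc k)
      then show ?case using qk qlink_MQ by auto
    qed
    have "MQ (last cs)" using ql qlink_MQ MQ_cohom qlink_cdga2 by blast
    then show ?thesis using ind[of "length cs - 1"] False by (simp add: last_conv_nth)
  qed
qed


definition pr1 :: "int \<times> ('a \<times> 'a) \<Rightarrow> int \<times> 'a" where "pr1 X = (fst X, fst (snd X))"
definition pr2 :: "nat \<Rightarrow> int \<times> ('a \<times> 'a) \<Rightarrow> int \<times> 'a" where
  "pr2 n X = (fst X - (2 * int n - 1), snd (snd X))"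

lemma fst_pr[simp]: "fst (pr1 X) = fst X" "fst (pr2 n X) = fst X - (2 * int n - 1)"
  by (simp_all add: pr1_def pr2_def)

lemma T_simps: "cmp (A_theta A n w) k = cmp A k \<times> cmp A (k - (2 * int n - 1))"
  "zr (A_theta A n w) k = (zr A k, zr A (k - (2 * int n - 1)))"
  "ad (A_theta A n w) k P Q = (ad A k (fst P) (fst Q), ad A (k - (2 * int n - 1)) (snd P) (snd Q))"
  "sc (A_theta A n w) k c P = (sc A k c (fst P), sc A (k - (2 * int n - 1)) c (snd P))"
  "ml (A_theta A n w) k l P Q = (ml A k l (fst P) (fst Q),
      ad A (k + l - (2 * int n - 1)) (ml A k (l - (2 * int n - 1)) (fst P) (snd Q))
        (sc A (k + l - (2 * int n - 1)) (psign l) (ml A (k - (2 * int n - 1)) l (snd P) (fst Q))))"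
  "df (A_theta A n w) k P = (ad A (k + 1) (df A k (fst P))
      (sc A (k + 1) (psign (k - (2 * int n - 1))) (ml A (k - (2 * int n - 1)) (2 * int n) (snd P) w)),
      df A (k - (2 * int n - 1)) (snd P))"
  "un (A_theta A n w) = (un A, zr A (0 - (2 * int n - 1)))"
  by (simp_all add: A_theta_def Let_def)

lemma hm_T: "hm (A_theta A n w) X \<longleftrightarrow> hm A (pr1 X) \<and> hm A (pr2 n X)"
  by (auto simp add: hm_def pr1_def pr2_def T_simps mem_Times_iff)

lemma pr1_padd: "pr1 (padd (A_theta A n w) X Y) = padd A (pr1 X) (pr1 Y)"
  by (simp add: pr1_def padd_def T_simps)
lemma pr2_padd: "pr2 n (padd (A_theta A n w) X Y) = padd A (pr2 n X) (pr2 n Y)"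
  by (simp add: pr2_def padd_def T_simps)
lemma pr1_psc: "pr1 (psc (A_theta A n w) c X) = psc A c (pr1 X)"
  by (simp add: pr1_def psc_def T_simps)
lemma pr2_psc: "pr2 n (psc (A_theta A n w) c X) = psc A c (pr2 n X)"
  by (simp add: pr2_def psc_def T_simps)
lemma pr1_pmul: "pr1 (pmul (A_theta A n w) X Y) = pmul A (pr1 X) (pr1 Y)"
  by (simp add: pr1_def pmul_def T_simps)
lemma pr2_pmul: "pr2 n (pmul (A_theta A n w) X Y) =
   padd A (pmul A (pr1 X) (pr2 n Y)) (psc A (psign (fst Y)) (pmul A (pr2 n X) (pr1 Y)))"
proof -
  have e: "fst X + (fst Y - (2 * int n - 1)) = fst X + fst Y - (2 * int n - 1)"
    "fst X - (2 * int n - 1) + fst Y = fst X + fst Y - (2 * int n - 1)" by simp_all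
  show ?thesis by (simp add: pr1_def pr2_def pmul_def padd_def psc_def T_simps e)
qed
lemma pr1_pd: "pr1 (pd (A_theta A n w) X) =
  padd A (pd A (pr1 X)) (psc A (psign (fst X - (2 * int n - 1))) (pmul A (pr2 n X) (2 * int n, w)))"
proof -
  have e: "fst X - (2 * int n - 1) + 2 * int n = fst X + 1" by simp
  show ?thesis by (simp add: pr1_def pr2_def pd_def pmul_def padd_def psc_def T_simps e)
qed
lemma pr2_pd: "pr2 n (pd (A_theta A n w) X) = pd A (pr2 n X)"
proof -
  have e: "fst X + 1 - (2 * int n - 1) = fst X - (2 * int n - 1) + 1" by simp
  show ?thesis by (simp add: pr1_def pr2_def pd_def T_simps e)
qed
lemma pr1_pz: "pr1 (pz (A_theta A n w) k) = pz A k"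
  by (simp add: pr1_def pz_def T_simps)
lemma pr2_pz: "pr2 n (pz (A_theta A n w) k) = pz A (k - (2 * int n - 1))"
  by (simp add: pr2_def pz_def T_simps)


context pc begin

lemma cob: assumes td: "\<forall>i. \<forall>x\<in>cmp A i. df A i x = zr A (i + 1)" shows "cobdry A i = {zr A i}"
proof -
  have "\<forall>e\<in>cmp A (i - 1). df A (i - 1) e = zr A i" using td by (metis diff_add_cancel)
  then show ?thesis unfolding cobdry_def using z_in[of "i - 1"] by auto
qed

lemma coset_single: assumes td: "\<forall>i. \<forall>x\<in>cmp A i. df A i x = zr A (i + 1)" and x: "x \<in> cmp A i"
  shows "coset A i x = {x}"
  unfolding coset_def cob[OF td] using add_zr[OF x] by auto

lemma cocyc_all: assumes td: "\<forall>i. \<forall>x\<in>cmp A i. df A i x = zr A (i + 1)" shows "cocyc A i = cmp A i"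
  unfolding cocyc_def using td by auto

lemma crep_single: assumes td: "\<forall>i. \<forall>x\<in>cmp A i. df A i x = zr A (i + 1)" and x: "x \<in> cmp A i"
  shows "crep A i {x} = x"
proof -
  have "\<exists>z. z \<in> cocyc A i \<and> {x} = coset A i z" using x coset_single[OF td x] cocyc_all[OF td] by blast
  then have "crep A i {x} \<in> cocyc A i \<and> {x} = coset A i (crep A i {x})"
    unfolding crep_def by (rule someI_ex)
  then show ?thesis using coset_single[OF td] cocyc_all[OF td] by auto
qed

lemma coh_cmp: assumes td: "\<forall>i. \<forall>x\<in>cmp A i. df A i x = zr A (i + 1)"
  shows "cmp (cohom A) i = (\<lambda>x. {x}) ` cmp A i"
  unfolding cohom_def using coset_single[OF td] cocyc_all[OF td] by auto

lemma coh_zr: assumes td: "\<forall>i. \<forall>x\<in>cmp A i. df A i x = zr A (i + 1)"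
  shows "zr (cohom A) i = {zr A i}"
  unfolding cohom_def using coset_single[OF td] z_in by simp

lemma coh_sc: assumes td: "\<forall>i. \<forall>x\<in>cmp A i. df A i x = zr A (i + 1)" and x: "x \<in> cmp A i"
  shows "sc (cohom A) i c {x} = {sc A i c x}"
  unfolding cohom_def using coset_single[OF td] crep_single[OF td x] sc_in x by simp

lemma coh_ml: assumes td: "\<forall>i. \<forall>x\<in>cmp A i. df A i x = zr A (i + 1)" and x: "x \<in> cmp A i"
  and y: "y \<in> cmp A j"
  shows "ml (cohom A) i j {x} {y} = {ml A i j x y}"
  unfolding cohom_def using coset_single[OF td] crep_single[OF td x] crep_single[OF td y] ml_in x y by simp

lemma alpha_zero: assumes td: "\<forall>i. \<forall>x\<in>cmp A i. df A i x = zr A (i + 1)"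
  and lin: "lin_functional (cohom A) k al"
  shows "al {zr A k} = 0"
proof -
  have "{zr A k} \<in> cmp (cohom A) k" using coh_cmp[OF td] z_in by blast
  then have "al (sc (cohom A) k 0 {zr A k}) = 0" using lin unfolding lin_functional_def by simp
  then show ?thesis using coh_sc[OF td z_in] sc_zero z_in by simp
qed

lemma poinc1: assumes td: "\<forall>i. \<forall>x\<in>cmp A i. df A i x = zr A (i + 1)"
  and pclass: "poincare_class (cohom A) N al"
  and omega_in: "w \<in> cmp A N"
  and omega_span: "\<forall>X\<in>cmp (cohom A) N. \<exists>c. X = sc (cohom A) N c (coset A N w)"
  and x: "x \<in> cmp A p" and nz: "x \<noteq> zr A p"
  shows "\<exists>y\<in>cmp A (N - p). ml A p (N - p) x y = w"
proof -
  have lin: "lin_functional (cohom A) N al" using pclass unfolding poincare_class_def by blast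
  have inj: "\<forall>X\<in>cmp (cohom A) p. (\<forall>Y\<in>cmp (cohom A) (N - p). al (ml (cohom A) p (N - p) X Y) = 0)
     \<longrightarrow> X = zr (cohom A) p" using pclass unfolding poincare_class_def by blast
  have "{x} \<noteq> zr (cohom A) p" using nz coh_zr[OF td] by simp
  moreover have "{x} \<in> cmp (cohom A) p" using coh_cmp[OF td] x by blast
  ultimately obtain Y where Y: "Y \<in> cmp (cohom A) (N - p)" "al (ml (cohom A) p (N - p) {x} Y) \<noteq> 0"
    using inj by blast
  obtain y where y: "y \<in> cmp A (N - p)" "Y = {y}" using Y(1) coh_cmp[OF td] by auto
  let ?m = "ml A p (N - p) x y"
  have m: "?m \<in> cmp A N" using ml_in[OF x y(1)] by simp
  have am: "al {?m} \<noteq> 0" using Y(2) y coh_ml[OF td x y(1)] by simp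
  have "{?m} \<in> cmp (cohom A) N" using coh_cmp[OF td] m by blast
  then obtain c where "{?m} = sc (cohom A) N c (coset A N w)" using omega_span by blast
  then have mc: "?m = sc A N c w" using coset_single[OF td omega_in] coh_sc[OF td omega_in] by simp
  have c0: "c \<noteq> 0"
  proof
    assume "c = 0"
    then have "?m = zr A N" using mc sc_zero omega_in by simp
    then show False using am alpha_zero[OF td lin] by simp
  qed
  let ?y = "sc A (N - p) (inverse c) y"
  have "ml A p (N - p) x ?y = sc A (p + (N - p)) (inverse c) ?m" using ml_sc_r[OF x y(1)] by simp
  also have "\<dots> = sc A N (inverse c) (sc A N c w)" using mc by simp
  also have "\<dots> = w" using sc_mult[OF omega_in, of "inverse c" c, symmetric] c0 sc_one omega_in by simp
  finally show ?thesis using sc_in[OF y(1)] by blast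
qed

lemma poinc2: assumes td: "\<forall>i. \<forall>x\<in>cmp A i. df A i x = zr A (i + 1)"
  and pclass: "poincare_class (cohom A) N al"
  and omega_in: "w \<in> cmp A N"
  and omega_span: "\<forall>X\<in>cmp (cohom A) N. \<exists>c. X = sc (cohom A) N c (coset A N w)"
  and z: "z \<in> cmp A 0" and zw: "ml A 0 N z w = zr A N"
  shows "z = zr A 0"
proof -
  have lin: "lin_functional (cohom A) N al" using pclass unfolding poincare_class_def by blast
  have inj: "\<forall>X\<in>cmp (cohom A) 0. (\<forall>Y\<in>cmp (cohom A) (N - 0). al (ml (cohom A) 0 (N - 0) X Y) = 0)
     \<longrightarrow> X = zr (cohom A) 0" using pclass unfolding poincare_class_def by blast
  have "\<forall>Y\<in>cmp (cohom A) N. al (ml (cohom A) 0 N {z} Y) = 0"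
  proof
    fix Y assume Y: "Y \<in> cmp (cohom A) N"
    then obtain c where "Y = sc (cohom A) N c (coset A N w)" using omega_span by blast
    then have Yc: "Y = {sc A N c w}" using coset_single[OF td omega_in] coh_sc[OF td omega_in] by simp
    have "ml A 0 N z (sc A N c w) = sc A N c (ml A 0 N z w)" using ml_sc_r[OF z omega_in] by simp
    also have "\<dots> = zr A N" using zw sc_zr by simp
    finally show "al (ml (cohom A) 0 N {z} Y) = 0"
      using Yc coh_ml[OF td z sc_in[OF omega_in]] alpha_zero[OF td lin] by simp
  qed
  moreover have "{z} \<in> cmp (cohom A) 0" using coh_cmp[OF td] z by blast
  ultimately have "{z} = zr (cohom A) 0" using inj by simp
  then show ?thesis using coh_zr[OF td] by simp
qed

end


lemma T_eq: "pr1 X = pr1 Y \<Longrightarrow> pr2 n X = pr2 n Y \<Longrightarrow> X = Y"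
  by (cases X, cases Y) (auto simp: pr1_def pr2_def)

context pc begin

lemma pd_td: "\<forall>i. \<forall>x\<in>cmp A i. df A i x = zr A (i + 1) \<Longrightarrow> hm A X \<Longrightarrow> pd A X = pz A (fst X + 1)"
  by (simp add: hm_def pd_def pz_def)

lemma pmul_un_l: "hm A X \<Longrightarrow> pmul A (0, un A) X = X"
  by (cases X) (simp add: pmul_def hm_def ml_un)
lemma pmul_un_r: "hm A X \<Longrightarrow> pmul A X (0, un A) = X"
  by (cases X) (simp add: pmul_def hm_def ml_un)
lemma hm_un: "hm A (0, un A)" by (simp add: hm_def un_in)

end

lemma notMQ:
  fixes A :: "('k::field_char_0, 'a) cdga" and n :: nat and w :: 'a and al :: "'a set \<Rightarrow> 'k"
  assumes cdga: "is_cdga A"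
    and td: "\<forall>i. \<forall>x\<in>cmp A i. df A i x = zr A (i + 1)"
    and pclass: "poincare_class (cohom A) (2 * int n) al"
    and omega_in: "w \<in> cmp A (2 * int n)"
    and omega_span: "\<forall>X\<in>cmp (cohom A) (2 * int n).
                        \<exists>c. X = sc (cohom A) (2 * int n) c (coset A (2 * int n) w)"
    and x: "x \<in> cmp A p" and nz: "x \<noteq> zr A p" and op: "odd p"
  shows "\<not> MQ (A_theta A n w)"
proof
  assume M: "MQ (A_theta A n w)"
  interpret pc A using cdga pc_def by blast
  let ?T = "A_theta A n w"
  let ?N = "2 * int n"
  let ?t = "2 * int n - 1"
  obtain y where y: "y \<in> cmp A (?N - p)" "ml A p (?N - p) x y = w"
    using poinc1[OF td pclass omega_in omega_span x nz] by blast
  have hx: "hm A (p, x)" "hm A (?N - p, y)" "hm A (?N, w)" using x y omega_in by (simp_all add: hm_def)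
  have xy: "pmul A (p, x) (?N - p, y) = (?N, w)" using y by (simp add: pmul_def)
  have sgn: "psign ((?N - p) * p) = (-1 :: 'k)" "psign p = (-1 :: 'k)" using op by (simp_all add: psign_def)
  have yx: "pmul A (?N - p, y) (p, x) = psc A (-1) (?N, w)"
    using pmul_comm[OF hx(2) hx(1)] xy sgn by simp
  define a where "a = (p, (x, zr A (p - ?t)))"
  define b where "b = (?N - p, (y, zr A (?N - p - ?t)))"
  define u where "u = (?t, (zr A ?t, un A))"
  define v where "v = (?t, (zr A ?t, sc A 0 (-1) (un A)))"
  have pa: "pr1 a = (p, x)" "pr2 n a = pz A (p - ?t)" by (simp_all add: a_def pr1_def pr2_def pz_def)
  have pb: "pr1 b = (?N - p, y)" "pr2 n b = pz A (?N - p - ?t)" by (simp_all add: b_def pr1_def pr2_def pz_def)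
  have pu: "pr1 u = pz A ?t" "pr2 n u = (0, un A)" by (simp_all add: u_def pr1_def pr2_def pz_def)
  have pv: "pr1 v = pz A ?t" "pr2 n v = psc A (-1) (0, un A)" by (simp_all add: v_def pr1_def pr2_def pz_def psc_def)
  have fa: "fst a = p" "fst b = ?N - p" "fst u = ?t" "fst v = ?t" by (simp_all add: a_def b_def u_def v_def)
  note prs = pr1_padd pr2_padd pr1_psc pr2_psc pr1_pmul pr2_pmul pr1_pd pr2_pd pr1_pz pr2_pz
  note tds = pd_td[OF td]
  have hT: "hm ?T a" "hm ?T b" "hm ?T u" "hm ?T v" using pa pb pu pv hx hm_un by (simp_all add: hm_T)
  have ca: "cyc ?T a" unfolding cyc_def using hT
    by (auto intro!: T_eq[where n=n] simp: prs pa hx tds fa)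
  have cb: "cyc ?T b" unfolding cyc_def using hT
    by (auto intro!: T_eq[where n=n] simp: prs pb hx tds fa)
  have du: "pd ?T u = pmul ?T a b"
    by (rule T_eq[where n=n]) (simp_all add: prs pa pb pu hx tds fa hm_un pmul_un_l xy)
  have dv: "pd ?T v = pmul ?T b a"
    by (rule T_eq[where n=n]) (simp_all add: prs pa pb pv hx tds fa hm_un pmul_un_l yx)
  have "IE ?T a a (Val ?T a a u v)" using M ca cb hT du dv unfolding MQ_def by blast
  then obtain z w' e where zwe: "cyc ?T z" "cyc ?T w'" "hm ?T e" "fst a + fst z = fst (Val ?T a a u v)"
      "fst w' + fst a = fst (Val ?T a a u v)" "fst e + 1 = fst (Val ?T a a u v)"
      "Val ?T a a u v = padd ?T (padd ?T (pmul ?T a z) (pmul ?T w' a)) (pd ?T e)"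
    unfolding IE_def by blast
  have fV: "fst (Val ?T a a u v) = ?t + p" by (simp add: Val_def fa)
  have z2: "pr2 n Z = pz A 0" if Z: "cyc ?T Z" "fst Z = ?t" for Z
  proof -
    have hZ: "hm A (pr1 Z)" "hm A (pr2 n Z)" using Z(1) by (simp_all add: hm_T cyc_def)
    have "pr1 (pd ?T Z) = pr1 (pz ?T (fst Z + 1))" using Z cyc_def by metis
    then have "padd A (pz A (fst Z + 1)) (psc A (psign (fst Z - ?t)) (pmul A (pr2 n Z) (?N, w))) = pz A (fst Z + 1)"
      by (simp add: prs tds hZ)
    then have e1: "psc A (psign (fst Z - ?t)) (pmul A (pr2 n Z) (?N, w)) = pz A (fst Z + 1)"
      using hZ hx Z by simp
    have "pmul A (pr2 n Z) (?N, w) = psc A (psign (fst Z - ?t)) (psc A (psign (fst Z - ?t)) (pmul A (pr2 n Z) (?N, w)))"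
      using hZ hx by (simp add: mult_ac)
    also have "\<dots> = pz A (fst Z + 1)" using e1 by simp
    finally have e2: "pmul A (pr2 n Z) (?N, w) = pz A (fst Z + 1)" .
    obtain z2 where Zz: "pr2 n Z = (0, z2)" using Z by (simp add: pr2_def)
    have z2in: "z2 \<in> cmp A 0" using hZ Zz by (simp add: hm_def)
    have "ml A 0 ?N z2 w = zr A ?N" using e2 Zz Z(2) by (simp add: pmul_def pz_def)
    then have "z2 = zr A 0" using poinc2[OF td pclass omega_in omega_span z2in] by blast
    then show ?thesis using Zz by (simp add: pz_def)
  qed
  have fz: "fst z = ?t" "fst w' = ?t" using zwe(4,5) fV fa by simp_all
  have hz: "hm A (pr1 z)" "hm A (pr1 w')" "hm A (pr2 n e)" using zwe(1,2,3) by (simp_all add: hm_T cyc_def)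
  have "pr2 n (Val ?T a a u v) = pr2 n (padd ?T (padd ?T (pmul ?T a z) (pmul ?T w' a)) (pd ?T e))"
    using zwe(7) by simp
  also have "\<dots> = pz A p"
    using z2[OF zwe(1) fz(1)] z2[OF zwe(2) fz(2)] hz hx fz zwe(6) fV by (simp add: prs pa tds)
  finally have "pr2 n (Val ?T a a u v) = pz A p" .
  moreover have "pr2 n (Val ?T a a u v) = psc A (-2) (p, x)"
    using hx sgn hm_un by (simp add: Val_def prs pa pu pv fa pmul_un_l pmul_un_r padd_psc_same)
  ultimately have "psc A (-2) (p, x) = pz A p" by simp
  then have "sc A p (-2) x = zr A p" by (simp add: psc_def pz_def)
  then have "sc A p (-1/2) (sc A p (-2) x) = zr A p" using sc_zr by simp
  then have "x = zr A p" using sc_mult[OF x, of "-1/2" "-2", symmetric] sc_one[OF x] by simp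
  then show False using nz by blast
qed


theorem lemma3p6:
  fixes A :: "('k::field_char_0, 'a) cdga" and n :: nat and \<omega> :: 'a
    and \<alpha> :: "'a set \<Rightarrow> 'k"
  assumes cdga: "is_cdga A"
    and triv_d: "\<forall>i. \<forall>x\<in>cmp A i. df A i x = zr A (i + 1)"
    and poinc: "poincare_cdga A (2 * int n)"
    and pclass: "poincare_class (cohom A) (2 * int n) \<alpha>"
    and omega_in: "\<omega> \<in> cmp A (2 * int n)"
    and omega_dual: "\<alpha> (coset A (2 * int n) \<omega>) = 1"
    and omega_span: "\<forall>X\<in>cmp (cohom A) (2 * int n).
                        \<exists>c. X = sc (cohom A) (2 * int n) c (coset A (2 * int n) \<omega>)"
    and neg_zero: "\<forall>i < 0. cmp A i = {zr A i}"
    and formal: "formal_in TYPE('z) (A_theta A n \<omega>)"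
  shows "\<forall>i::int. cmp A (2 * i + 1) = {zr A (2 * i + 1)}"
proof
  fix i :: int
  interpret pc A using cdga pc_def by blast
  show "cmp A (2 * i + 1) = {zr A (2 * i + 1)}"
  proof (rule ccontr)
    assume ne: "cmp A (2 * i + 1) \<noteq> {zr A (2 * i + 1)}"
    obtain x where x: "x \<in> cmp A (2 * i + 1)" "x \<noteq> zr A (2 * i + 1)"
      using ne z_in[of "2 * i + 1"] by blast
    have "odd (2 * i + 1)" by simp
    then have "\<not> MQ (A_theta A n \<omega>)"
      using notMQ[OF cdga triv_d pclass omega_in omega_span x] by blast
    moreover have "MQ (A_theta A n \<omega>)" using formal_MQ[OF formal] .
    ultimately show False by blast
  qed
qed

end
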